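(* Let $F$ be a time-dependent Finsler metric on $M$ over a time interval containing $[t_0,T[$, let $N\subset M$ be a smooth embedded orientable hypersurface with $F_{t_0}$-unit normal field $n$, and let $\gamma:N\times\,]t_0,T[\,\to\mathcal U\subset M$ be an $(N,t_0)$-based unit fiber net. Then the following two conditions are equivalent: (A) (energy pre-extremal condition) there is a function $\rho$ on $N\times\,]t_0,T[$ such that for all $(s,t)$, $$\rho(s,t)\,\dot\gamma_t(s,t)=\sum_j\Big(\ddot\gamma_t^{\,j}(s,t)+2G^j\big(t,\gamma(s,t),\dot\gamma_t(s,t)\big)+N_0^j\big(t,\gamma(s,t),\dot\gamma_t(s,t)\big)\Big)\partial_{u^j};$$ (B) (Hamilton orthogonality) for all $s\in N$, $t\in\,]t_0,T[$ and every tangent vector $X\in T_sN$, the vector $d\gamma_{(s,t)}(X,0)$ (the derivative of $\gamma$ in the $N$-direction $X$) is $F_t$-orthogonal to the ray direction $\dot\gamma_t(s,t)$, i.e. $g_{t,\gamma(s,t),\dot\gamma_t(s,t)}\big(\dot\gamma_t(s,t),\,d\gamma_{(s,t)}(X,0)\big)=0$.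
   Context: Let $M$ be a smooth $n$-manifold, locally identified with an open subset of $\mathbb R^n$ with coordinates $u=(u^1,\dots,u^n)$; tangent vectors are written $y=y^k\partial_{u^k}$ (summation convention over repeated indices). A time-dependent Finsler metric (equivalently a regular rheonomic Lagrangean $L=F^2$) on $M$ over a time interval $I$ is a function $F:I\times TM\to[0,\infty)$, $F=F(t,u,y)$, smooth on $I\times(TM\setminus\{0\})$, positively homogeneous of degree one in $y$ ($F(t,u,ky)=kF(t,u,y)$ for $k>0$), such that for each $(t,u)$ and $y\neq0$ the matrix $g_{ij}(t,u,y)=\frac12\frac{\partial^2F^2}{\partial y^i\partial y^j}(t,u,y)$ is positive definite; $(g^{ij})$ denotes its inverse and $g_{t,u,y}(V,W)=g_{ij}(t,u,y)V^iW^j$. Write $F_t=F(t,\cdot,\cdot)$. Define $G^i(t,u,y)=\frac14 g^{il}\Big(\frac{\partial^2F^2}{\partial u^k\partial y^l}y^k-\frac{\partial F^2}{\partial u^l}\Big)$ and $N_0^i(t,u,y)=\frac12 g^{il}\frac{\partial^2F^2}{\partial t\,\partial y^l}$. For $p\in M$, a time $t$ and $W\in T_pM\setminus\{0\}$, a vector $V\in T_pM$ is called $F_t$-orthogonal to $W$ if $g_{t,p,W}(W,V)=0$. Let $N^{n-1}\subset M$ be a smooth embedded orientable hypersurface with a normal field $n$ at time $t_0$: for $s\in N$, $F(t_0,s,n(s))=1$ and every $X\in T_sN$ is $F_{t_0}$-orthogonal to $n(s)$. An $(N,t_0)$-based unit fiber net is a diffeomorphism $\gamma:N\times\,]t_0,T[\,\to\mathcal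 U$ onto an open set $\mathcal U\subset M$, extending smoothly to $t=t_0$, such that $\gamma(s,t_0)=s$, $\dot\gamma_t(s,t_0)=n(s)$ for all $s\in N$, and $F\big(t,\gamma(s,t),\dot\gamma_t(s,t)\big)=1$ for all $s\in N$, $t\in\,]t_0,T[$. Here $\dot\gamma_t,\ddot\gamma_t$ denote first and second partial derivatives with respect to $t$; the curves $t\mapsto\gamma(s,t)$ are called rays. *)

theory Defs
  imports "HOL-Analysis.Analysis"
begin

definition dirderiv :: "('a::real_normed_vector \<Rightarrow> 'b::real_normed_vector) \<Rightarrow> 'a \<Rightarrow> 'a \<Rightarrow> 'b" where
  "dirderiv f x v = vector_derivative (\<lambda>h. f (x + h *\<^sub>R v)) (at 0)"

fun iter_dd :: "('a::real_normed_vector \<Rightarrow> 'b::real_normed_vector) \<Rightarrow> 'a list \<Rightarrow> 'a \<Rightarrow> 'b" where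
  "iter_dd f [] = f"
| "iter_dd f (v # vs) = (\<lambda>x. dirderiv (iter_dd f vs) x v)"

definition smooth_on :: "'a::euclidean_space set \<Rightarrow> ('a \<Rightarrow> 'b::real_normed_vector) \<Rightarrow> bool" where
  "smooth_on S f \<longleftrightarrow> open S \<and>
     (\<forall>vs. continuous_on S (iter_dd f vs) \<and>
        (\<forall>x\<in>S. \<forall>v. (\<lambda>h. iter_dd f vs (x + h *\<^sub>R v)) differentiable (at 0)))"

definition smooth_on_set :: "'a::euclidean_space set \<Rightarrow> ('a \<Rightarrow> 'b::real_normed_vector) \<Rightarrow> bool" where
  "smooth_on_set A f \<longleftrightarrow> (\<exists>U g. A \<subseteq> U \<and> smooth_on U g \<and> (\<forall>x\<in>A. g x = f x))"

definition embedded_hypersurface :: "(real^'n) set \<Rightarrow> bool" where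
  "embedded_hypersurface N \<longleftrightarrow>
     (\<forall>s\<in>N. \<exists>W (\<phi>::real^'n \<Rightarrow> real). open W \<and> s \<in> W \<and> smooth_on W \<phi> \<and>
        (\<forall>x\<in>W. \<exists>v. dirderiv \<phi> x v \<noteq> 0) \<and> N \<inter> W = {x\<in>W. \<phi> x = 0})"

definition tangent_space :: "(real^'n) set \<Rightarrow> real^'n \<Rightarrow> (real^'n) set" where
  "tangent_space N s = {X. \<exists>c. c 0 = s \<and> (\<forall>h. c h \<in> N) \<and> (c has_vector_derivative X) (at 0)}"

definition orientable_hypersurface :: "(real^'n) set \<Rightarrow> bool" where
  "orientable_hypersurface N \<longleftrightarrow>
     (\<exists>\<nu>. continuous_on N \<nu> \<and> (\<forall>s\<in>N. \<nu> s \<notin> span (tangent_space N s)))"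

type_synonym 'n tfun = "real \<Rightarrow> real^'n \<Rightarrow> real^'n \<Rightarrow> real"

definition dY :: "'n::finite \<Rightarrow> 'n tfun \<Rightarrow> 'n tfun" where
  "dY i f = (\<lambda>t u y. deriv (\<lambda>h. f t u (y + h *\<^sub>R axis i 1)) 0)"

definition dU :: "'n::finite \<Rightarrow> 'n tfun \<Rightarrow> 'n tfun" where
  "dU k f = (\<lambda>t u y. deriv (\<lambda>h. f t (u + h *\<^sub>R axis k 1) y) 0)"

definition dT :: "'n::finite tfun \<Rightarrow> 'n tfun" where
  "dT f = (\<lambda>t u y. deriv (\<lambda>\<tau>. f \<tau> u y) t)"

definition Lag :: "'n::finite tfun \<Rightarrow> 'n tfun" where
  "Lag F = (\<lambda>t u y. (F t u y)\<^sup>2)"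

definition gmat :: "'n::finite tfun \<Rightarrow> real \<Rightarrow> real^'n \<Rightarrow> real^'n \<Rightarrow> real^'n^'n" where
  "gmat F t u y = (\<chi> i j. (1/2) * dY i (dY j (Lag F)) t u y)"

definition gform :: "'n::finite tfun \<Rightarrow> real \<Rightarrow> real^'n \<Rightarrow> real^'n \<Rightarrow> real^'n \<Rightarrow> real^'n \<Rightarrow> real" where
  "gform F t u y V W = (\<Sum>i\<in>UNIV. \<Sum>j\<in>UNIV. gmat F t u y $ i $ j * V $ i * W $ j)"

definition ginv :: "'n::finite tfun \<Rightarrow> real \<Rightarrow> real^'n \<Rightarrow> real^'n \<Rightarrow> real^'n^'n" where
  "ginv F t u y = matrix_inv (gmat F t u y)"

definition Gspray :: "'n::finite tfun \<Rightarrow> real \<Rightarrow> real^'n \<Rightarrow> real^'n \<Rightarrow> real^'n" where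
  "Gspray F t u y = (\<chi> i. (1/4) * (\<Sum>l\<in>UNIV. ginv F t u y $ i $ l *
      ((\<Sum>k\<in>UNIV. dU k (dY l (Lag F)) t u y * y $ k) - dU l (Lag F) t u y)))"

definition N0 :: "'n::finite tfun \<Rightarrow> real \<Rightarrow> real^'n \<Rightarrow> real^'n \<Rightarrow> real^'n" where
  "N0 F t u y = (\<chi> i. (1/2) * (\<Sum>l\<in>UNIV. ginv F t u y $ i $ l * dT (dY l (Lag F)) t u y))"

definition time_finsler :: "real set \<Rightarrow> (real^'n) set \<Rightarrow> 'n::finite tfun \<Rightarrow> bool" where
  "time_finsler I M F \<longleftrightarrow>
     is_interval I \<and> open M \<and>
     smooth_on_set (I \<times> M \<times> (UNIV - {0})) (\<lambda>(t, u, y). F t u y) \<and>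
     (\<forall>t\<in>I. \<forall>u\<in>M. \<forall>y. F t u y \<ge> 0) \<and>
     (\<forall>t\<in>I. \<forall>u\<in>M. \<forall>y. \<forall>k>0. F t u (k *\<^sub>R y) = k * F t u y) \<and>
     (\<forall>t\<in>I. \<forall>u\<in>M. \<forall>y. y \<noteq> 0 \<longrightarrow> (\<forall>V. V \<noteq> 0 \<longrightarrow> gform F t u y V V > 0))"

definition tvel :: "(real^'n \<Rightarrow> real \<Rightarrow> real^'n) \<Rightarrow> real^'n \<Rightarrow> real \<Rightarrow> real^'n" where
  "tvel \<gamma> s t = vector_derivative (\<gamma> s) (at t)"

definition tacc :: "(real^'n \<Rightarrow> real \<Rightarrow> real^'n) \<Rightarrow> real^'n \<Rightarrow> real \<Rightarrow> real^'n" where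
  "tacc \<gamma> s t = vector_derivative (tvel \<gamma> s) (at t)"

definition unit_normal_field ::
  "'n::finite tfun \<Rightarrow> real \<Rightarrow> (real^'n) set \<Rightarrow> (real^'n \<Rightarrow> real^'n) \<Rightarrow> bool" where
  "unit_normal_field F t0 N n \<longleftrightarrow> smooth_on_set N n \<and>
     (\<forall>s\<in>N. F t0 s (n s) = 1 \<and> (\<forall>X\<in>tangent_space N s. gform F t0 s (n s) (n s) X = 0))"

definition unit_fiber_net ::
  "'n::finite tfun \<Rightarrow> (real^'n) set \<Rightarrow> real \<Rightarrow> real \<Rightarrow> (real^'n \<Rightarrow> real^'n)
   \<Rightarrow> (real^'n \<Rightarrow> real \<Rightarrow> real^'n) \<Rightarrow> (real^'n) set \<Rightarrow> bool" where
  "unit_fiber_net F N t0 T n \<gamma> U \<longleftrightarrow>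
     open U \<and>
     bij_betw (\<lambda>(s, t). \<gamma> s t) (N \<times> {t0<..<T}) U \<and>
     smooth_on_set (N \<times> {t0..<T}) (\<lambda>(s, t). \<gamma> s t) \<and>
     smooth_on U (inv_into (N \<times> {t0<..<T}) (\<lambda>(s, t). \<gamma> s t)) \<and>
     (\<forall>s\<in>N. \<gamma> s t0 = s \<and> vector_derivative (\<gamma> s) (at t0 within {t0..<T}) = n s) \<and>
     (\<forall>s\<in>N. \<forall>t\<in>{t0<..<T}. F t (\<gamma> s t) (tvel \<gamma> s t) = 1)"

end

theory Submission imports Defs begin


lemma dd_has:
  "(\<lambda>h. f (x + h *\<^sub>R v)) differentiable (at 0) \<Longrightarrow>
   ((\<lambda>h. f (x + h *\<^sub>R v)) has_vector_derivative dirderiv f x v) (at 0)"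
  by (simp add: dirderiv_def vector_derivative_works)

lemma line_at:
  assumes "(\<lambda>h. f ((p + \<tau> *\<^sub>R b) + h *\<^sub>R b)) differentiable (at 0)"
  shows "((\<lambda>\<sigma>. f (p + \<sigma> *\<^sub>R b)) has_vector_derivative dirderiv f (p + \<tau> *\<^sub>R b) b) (at \<tau>)"
proof -
  have 1: "((\<lambda>\<sigma>::real. \<sigma> - \<tau>) has_vector_derivative 1) (at \<tau>)"
    by (auto intro!: derivative_eq_intros simp: has_real_derivative_iff_has_vector_derivative[symmetric])
  have 2: "((\<lambda>h. f ((p + \<tau> *\<^sub>R b) + h *\<^sub>R b)) has_vector_derivative dirderiv f (p + \<tau> *\<^sub>R b) b) (at ((\<lambda>\<sigma>. \<sigma> - \<tau>) \<tau>))"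
    using dd_has[OF assms] by simp
  have "(((\<lambda>h. f ((p + \<tau> *\<^sub>R b) + h *\<^sub>R b)) \<circ> (\<lambda>\<sigma>. \<sigma> - \<tau>)) has_vector_derivative (1 *\<^sub>R dirderiv f (p + \<tau> *\<^sub>R b) b)) (at \<tau>)"
    by (rule vector_diff_chain_at[OF 1 2])
  moreover have "((\<lambda>h. f ((p + \<tau> *\<^sub>R b) + h *\<^sub>R b)) \<circ> (\<lambda>\<sigma>. \<sigma> - \<tau>)) = (\<lambda>\<sigma>. f (p + \<sigma> *\<^sub>R b))"
    by (auto simp: o_def algebra_simps)
  ultimately show ?thesis by simp
qed



lemma C1_from_dd:
  fixes f :: "'a::euclidean_space \<Rightarrow> 'b::real_normed_vector"
  assumes S: "open S" "x \<in> S"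
    and ld: "\<And>y v. y \<in> S \<Longrightarrow> (\<lambda>h. f (y + h *\<^sub>R v)) differentiable (at 0)"
    and ct: "\<And>b. b \<in> Basis \<Longrightarrow> continuous_on S (\<lambda>y. dirderiv f y b)"
  shows "(f has_derivative (\<lambda>v. \<Sum>b\<in>Basis. (v \<bullet> b) *\<^sub>R dirderiv f x b)) (at x)"
  unfolding has_derivative_at_alt
proof (intro conjI allI impI)
  show "bounded_linear (\<lambda>v. \<Sum>b\<in>Basis. (v \<bullet> b) *\<^sub>R dirderiv f x b)"
    by (intro bounded_linear_sum bounded_linear_scaleR_left bounded_linear_compose[OF bounded_linear_scaleR_left] bounded_linear_inner_left)
  fix e :: real assume e: "e > 0"
  define m where "m = card (Basis :: 'a set)"
  have m1: "m \<ge> 1" unfolding m_def using DIM_positive[where 'a='a] by linarith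
  obtain \<beta> where \<beta>: "bij_betw \<beta> {..<m} (Basis :: 'a set)"
    using ex_bij_betw_nat_finite[of "Basis :: 'a set"] unfolding m_def atLeast0LessThan by auto
  define \<epsilon> where "\<epsilon> = e / m"
  have \<epsilon>: "\<epsilon> > 0" using e m1 by (simp add: \<epsilon>_def)
  obtain r where r: "r > 0" "ball x r \<subseteq> S" using S openE by blast
  have "\<forall>b\<in>Basis. \<exists>d>0. \<forall>y\<in>S. dist y x < d \<longrightarrow> dist (dirderiv f y b) (dirderiv f x b) < \<epsilon>"
    using ct S(2) \<epsilon> unfolding continuous_on_iff by blast
  then obtain dd where dd: "\<And>b. b \<in> Basis \<Longrightarrow> dd b > 0"
    "\<And>b y. b \<in> Basis \<Longrightarrow> y \<in> S \<Longrightarrow> dist y x < dd b \<Longrightarrow> dist (dirderiv f y b) (dirderiv f x b) < \<epsilon>"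
    by metis
  define d0 where "d0 = Min (insert r (dd ` Basis))"
  have d0: "d0 > 0" unfolding d0_def using r dd by (subst Min_gr_iff) auto
  have d0r: "d0 \<le> r" unfolding d0_def by simp
  have d0b: "\<And>b. b \<in> Basis \<Longrightarrow> d0 \<le> dd b" unfolding d0_def by (intro Min_le) auto
  show "\<exists>d>0. \<forall>y. norm (y - x) < d \<longrightarrow>
      norm (f y - f x - (\<Sum>b\<in>Basis. ((y - x) \<bullet> b) *\<^sub>R dirderiv f x b)) \<le> e * norm (y - x)"
  proof (intro exI[of _ "d0 / m"] conjI allI impI)
    show "d0 / m > 0" using d0 m1 by simp
    fix y assume yx: "norm (y - x) < d0 / m"
    define v where "v = y - x"
    have vm: "m * norm v < d0" using yx m1 unfolding v_def by (simp add: field_simps)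
    define p where "p k = x + (\<Sum>i<k. (v \<bullet> \<beta> i) *\<^sub>R \<beta> i)" for k
    have \<beta>B: "\<And>i. i < m \<Longrightarrow> \<beta> i \<in> Basis" using \<beta> bij_betw_apply by fastforce
    have pm: "p m = y"
    proof -
      have "(\<Sum>i<m. (v \<bullet> \<beta> i) *\<^sub>R \<beta> i) = (\<Sum>b\<in>Basis. (v \<bullet> b) *\<^sub>R b)"
        using sum.reindex_bij_betw[OF \<beta>, of "\<lambda>b. (v \<bullet> b) *\<^sub>R b"] by simp
      then show ?thesis unfolding p_def v_def by (simp add: euclidean_representation)
    qed
    have lin: "(\<Sum>b\<in>Basis. ((y - x) \<bullet> b) *\<^sub>R dirderiv f x b) = (\<Sum>i<m. (v \<bullet> \<beta> i) *\<^sub>R dirderiv f x (\<beta> i))"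
      using sum.reindex_bij_betw[OF \<beta>, of "\<lambda>b. (v \<bullet> b) *\<^sub>R dirderiv f x b"] by (simp add: v_def)
    have tel: "f y - f x = (\<Sum>k<m. f (p (Suc k)) - f (p k))"
      using sum_lessThan_telescope[of "\<lambda>k. f (p k)" m] pm by (simp add: p_def)
    have sumabs: "(\<Sum>i<m. \<bar>v \<bullet> \<beta> i\<bar>) \<le> m * norm v"
    proof -
      have "(\<Sum>i<m. \<bar>v \<bullet> \<beta> i\<bar>) \<le> (\<Sum>i<m. norm v)"
        by (intro sum_mono Basis_le_norm \<beta>B) simp
      then show ?thesis by simp
    qed
    have termb: "norm (f (p (Suc k)) - f (p k) - (v \<bullet> \<beta> k) *\<^sub>R dirderiv f x (\<beta> k)) \<le> \<epsilon> * \<bar>v \<bullet> \<beta> k\<bar>"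
      if k: "k < m" for k
    proof -
      define b where "b = \<beta> k"
      define c where "c = v \<bullet> b"
      define q where "q = p k"
      have bB: "b \<in> Basis" using \<beta>B k b_def by simp
      have nb: "norm b = 1" using bB by simp
      have inball: "q + \<sigma> *\<^sub>R b \<in> S \<and> dist (q + \<sigma> *\<^sub>R b) x < dd b" if \<sigma>: "\<sigma> \<in> closed_segment 0 c" for \<sigma>
      proof -
        have sc: "\<bar>\<sigma>\<bar> \<le> \<bar>c\<bar>" using \<sigma> by (auto simp: closed_segment_eq_real_ivl split: if_splits)
        have "norm (q + \<sigma> *\<^sub>R b - x) \<le> norm (\<Sum>i<k. (v \<bullet> \<beta> i) *\<^sub>R \<beta> i) + norm (\<sigma> *\<^sub>R b)"
          unfolding q_def p_def by (metis add_diff_cancel_left' add.assoc norm_triangle_ineq)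
        also have "\<dots> \<le> (\<Sum>i<k. \<bar>v \<bullet> \<beta> i\<bar>) + \<bar>c\<bar>"
        proof (intro add_mono)
          have "norm (\<Sum>i<k. (v \<bullet> \<beta> i) *\<^sub>R \<beta> i) \<le> (\<Sum>i<k. norm ((v \<bullet> \<beta> i) *\<^sub>R \<beta> i))"
            by (rule norm_sum)
          also have "\<dots> = (\<Sum>i<k. \<bar>v \<bullet> \<beta> i\<bar>)"
            using k \<beta>B by (intro sum.cong) auto
          finally show "norm (\<Sum>i<k. (v \<bullet> \<beta> i) *\<^sub>R \<beta> i) \<le> (\<Sum>i<k. \<bar>v \<bullet> \<beta> i\<bar>)" .
          show "norm (\<sigma> *\<^sub>R b) \<le> \<bar>c\<bar>" using sc nb by simp
        qed
        also have "\<dots> = (\<Sum>i<Suc k. \<bar>v \<bullet> \<beta> i\<bar>)" by (simp add: c_def b_def)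
        also have "\<dots> \<le> (\<Sum>i<m. \<bar>v \<bullet> \<beta> i\<bar>)"
          using k by (intro sum_mono2) auto
        also have "\<dots> < d0" using sumabs vm by linarith
        finally have lt: "norm (q + \<sigma> *\<^sub>R b - x) < d0" .
        then have "q + \<sigma> *\<^sub>R b \<in> ball x r" using d0r by (simp add: dist_norm norm_minus_commute)
        then show ?thesis using r lt d0b[OF bB] by (auto simp: dist_norm)
      qed
      define \<phi> where "\<phi> \<sigma> = f (q + \<sigma> *\<^sub>R b) - \<sigma> *\<^sub>R dirderiv f x b" for \<sigma>
      have der: "(\<phi> has_derivative (\<lambda>h. h *\<^sub>R (dirderiv f (q + \<sigma> *\<^sub>R b) b - dirderiv f x b)))
          (at \<sigma> within closed_segment 0 c)" if \<sigma>: "\<sigma> \<in> closed_segment 0 c" for \<sigma>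
      proof -
        have "((\<lambda>\<sigma>. f (q + \<sigma> *\<^sub>R b)) has_vector_derivative dirderiv f (q + \<sigma> *\<^sub>R b) b) (at \<sigma>)"
          by (rule line_at) (use ld inball[OF \<sigma>] in blast)
        then have "(\<phi> has_vector_derivative (dirderiv f (q + \<sigma> *\<^sub>R b) b - dirderiv f x b)) (at \<sigma>)"
          unfolding \<phi>_def by (auto intro!: derivative_eq_intros)
        then show ?thesis
          by (simp add: has_vector_derivative_def has_derivative_at_withinI scaleR_diff_right)
      qed
      have bnd: "norm (\<phi> c - \<phi> 0) \<le> \<epsilon> * norm (c - 0)"
      proof (rule differentiable_bound[OF convex_closed_segment der])
        fix \<sigma> assume \<sigma>: "\<sigma> \<in> closed_segment 0 c"
        have "onorm (\<lambda>h::real. h *\<^sub>R (dirderiv f (q + \<sigma> *\<^sub>R b) b - dirderiv f x b))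
             = norm (dirderiv f (q + \<sigma> *\<^sub>R b) b - dirderiv f x b)"
          using onorm_scaleR_left[OF bounded_linear_ident] by (simp add: onorm_id)
        also have "\<dots> \<le> \<epsilon>" using dd(2)[OF bB] inball[OF \<sigma>] by (simp add: dist_norm less_imp_le)
        finally show "onorm (\<lambda>h::real. h *\<^sub>R (dirderiv f (q + \<sigma> *\<^sub>R b) b - dirderiv f x b)) \<le> \<epsilon>" .
      qed auto
      have "p (Suc k) = q + c *\<^sub>R b" by (simp add: p_def q_def c_def b_def)
      then show ?thesis using bnd by (simp add: \<phi>_def b_def c_def q_def algebra_simps)
    qed
    have "norm (f y - f x - (\<Sum>b\<in>Basis. ((y - x) \<bullet> b) *\<^sub>R dirderiv f x b))
        = norm (\<Sum>k<m. f (p (Suc k)) - f (p k) - (v \<bullet> \<beta> k) *\<^sub>R dirderiv f x (\<beta> k))"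
      unfolding tel lin by (simp add: sum_subtractf)
    also have "\<dots> \<le> (\<Sum>k<m. norm (f (p (Suc k)) - f (p k) - (v \<bullet> \<beta> k) *\<^sub>R dirderiv f x (\<beta> k)))"
      by (rule norm_sum)
    also have "\<dots> \<le> (\<Sum>k<m. \<epsilon> * \<bar>v \<bullet> \<beta> k\<bar>)" by (intro sum_mono termb) simp
    also have "\<dots> = \<epsilon> * (\<Sum>k<m. \<bar>v \<bullet> \<beta> k\<bar>)" by (simp add: sum_distrib_left)
    also have "\<dots> \<le> \<epsilon> * (m * norm v)" using sumabs \<epsilon> by (intro mult_left_mono) auto
    also have "\<dots> = e * norm (y - x)" using m1 by (simp add: \<epsilon>_def v_def)
    finally show "norm (f y - f x - (\<Sum>b\<in>Basis. ((y - x) \<bullet> b) *\<^sub>R dirderiv f x b)) \<le> e * norm (y - x)" .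
  qed
qed



lemma ev_line:
  fixes x v :: "'a::real_normed_vector"
  assumes "open W" "x \<in> W"
  shows "eventually (\<lambda>h::real. x + h *\<^sub>R v \<in> W) (nhds 0)"
proof -
  have "continuous_on UNIV (\<lambda>h::real. x + h *\<^sub>R v)" by (intro continuous_intros)
  then have "open ((\<lambda>h::real. x + h *\<^sub>R v) -` W \<inter> UNIV)"
    using assms continuous_on_open_vimage[of UNIV "\<lambda>h::real. x + h *\<^sub>R v"] by blast
  then show ?thesis using assms unfolding eventually_nhds by (intro exI[of _ "(\<lambda>h::real. x + h *\<^sub>R v) -` W"]) auto
qed

lemma iter_dd_append: "iter_dd (iter_dd f vs) ws = iter_dd f (ws @ vs)"
  by (induction ws) auto

lemma smooth_on_iter: "smooth_on S f \<Longrightarrow> smooth_on S (iter_dd f vs)"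
  unfolding smooth_on_def by (simp add: iter_dd_append)

lemma smooth_on_line: "smooth_on S f \<Longrightarrow> x \<in> S \<Longrightarrow> (\<lambda>h. f (x + h *\<^sub>R v)) differentiable (at 0)"
  unfolding smooth_on_def by (metis iter_dd.simps(1))

lemma smooth_on_cont: "smooth_on S f \<Longrightarrow> continuous_on S f"
  unfolding smooth_on_def by (metis iter_dd.simps(1))

lemma smooth_on_open: "smooth_on S f \<Longrightarrow> open S"
  unfolding smooth_on_def by simp

lemma smooth_on_dd: "smooth_on S f \<Longrightarrow> smooth_on S (\<lambda>x. dirderiv f x v)"
  using smooth_on_iter[of S f "[v]"] by simp

lemma smooth_on_has_dd: "smooth_on S f \<Longrightarrow> x \<in> S \<Longrightarrow>
   ((\<lambda>h. f (x + h *\<^sub>R v)) has_vector_derivative dirderiv f x v) (at 0)"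
  by (intro dd_has smooth_on_line)

lemma smooth_on_deriv:
  fixes f :: "'a::euclidean_space \<Rightarrow> 'b::real_normed_vector"
  assumes "smooth_on S f" "x \<in> S"
  shows "(f has_derivative (\<lambda>v. dirderiv f x v)) (at x)" "linear (\<lambda>v. dirderiv f x v)"
proof -
  define f' where "f' = (\<lambda>v. \<Sum>b\<in>Basis. (v \<bullet> b) *\<^sub>R dirderiv f x b)"
  have D: "(f has_derivative f') (at x)"
    unfolding f'_def
  proof (rule C1_from_dd)
    show "open S" using assms smooth_on_open by blast
    show "x \<in> S" by fact
    show "\<And>y v. y \<in> S \<Longrightarrow> (\<lambda>h. f (y + h *\<^sub>R v)) differentiable at 0"
      using assms smooth_on_line by blast
    show "\<And>b. continuous_on S (\<lambda>y. dirderiv f y b)"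
      using smooth_on_cont[OF smooth_on_dd[OF assms(1)]] by blast
  qed
  have eq: "dirderiv f x v = f' v" for v
  proof -
    have l: "((\<lambda>h::real. x + h *\<^sub>R v) has_derivative (\<lambda>h. h *\<^sub>R v)) (at 0)"
      by (auto intro!: derivative_eq_intros)
    have "((\<lambda>h. f (x + h *\<^sub>R v)) has_derivative (\<lambda>h. f' (h *\<^sub>R v))) (at 0)"
      using has_derivative_compose[OF l, of f f'] D by (simp add: o_def)
    moreover have "bounded_linear f'" using D has_derivative_bounded_linear by blast
    ultimately have "((\<lambda>h. f (x + h *\<^sub>R v)) has_vector_derivative f' v) (at 0)"
      unfolding has_vector_derivative_def by (simp add: linear_simps)
    then show ?thesis
      using smooth_on_has_dd[OF assms] vector_derivative_unique_at by blast
  qed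
  have "(\<lambda>v. dirderiv f x v) = f'" using eq by auto
  then show "(f has_derivative (\<lambda>v. dirderiv f x v)) (at x)" "linear (\<lambda>v. dirderiv f x v)"
    using D has_derivative_linear by auto
qed

lemma iter_dd_local:
  assumes "open W" "\<And>x. x \<in> W \<Longrightarrow> f x = g x"
  shows "x \<in> W \<Longrightarrow> iter_dd f vs x = iter_dd g vs x"
proof (induction vs arbitrary: x)
  case Nil then show ?case using assms by simp
next
  case (Cons v vs)
  have ev: "eventually (\<lambda>h. (\<lambda>h. iter_dd f vs (x + h *\<^sub>R v)) h = (\<lambda>h. iter_dd g vs (x + h *\<^sub>R v)) h) (nhds 0)"
    using ev_line[OF assms(1) Cons.prems, of v] by eventually_elim (use Cons.IH in auto)
  show ?case unfolding iter_dd.simps dirderiv_def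
    by (rule vector_derivative_cong_eq) (use ev in \<open>auto elim: eventually_mono\<close>)
qed

lemma smooth_on_local:
  assumes "smooth_on S g" "open W" "W \<subseteq> S" "\<And>x. x \<in> W \<Longrightarrow> f x = g x"
  shows "smooth_on W f"
  unfolding smooth_on_def
proof (intro conjI allI ballI)
  show "open W" by fact
  fix vs
  have eq: "\<And>x. x \<in> W \<Longrightarrow> iter_dd f vs x = iter_dd g vs x" using iter_dd_local assms(2,4) by blast
  show "continuous_on W (iter_dd f vs)"
    using continuous_on_subset[OF smooth_on_cont[OF smooth_on_iter[OF assms(1)]] assms(3)] eq
    by (metis continuous_on_cong)
  fix x v assume x: "x \<in> W"
  have ev: "eventually (\<lambda>h. iter_dd g vs (x + h *\<^sub>R v) = iter_dd f vs (x + h *\<^sub>R v)) (nhds 0)"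
    using ev_line[OF assms(2) x, of v] by eventually_elim (use eq in auto)
  have "((\<lambda>h. iter_dd g vs (x + h *\<^sub>R v)) has_vector_derivative dirderiv (iter_dd g vs) x v) (at 0)"
    using smooth_on_has_dd[OF smooth_on_iter[OF assms(1)]] x assms(3) by blast
  then have "((\<lambda>h. iter_dd f vs (x + h *\<^sub>R v)) has_vector_derivative dirderiv (iter_dd g vs) x v) (at 0)"
    using has_vector_derivative_cong_ev[where S=UNIV and x=0 and f="\<lambda>h. iter_dd g vs (x + h *\<^sub>R v)" and g="\<lambda>h. iter_dd f vs (x + h *\<^sub>R v)"] ev
    using eq x by (auto simp: eventually_mono[OF ev])
  then show "(\<lambda>h. iter_dd f vs (x + h *\<^sub>R v)) differentiable at 0"
    using differentiableI_vector by blast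
qed



lemma mvt_line:
  fixes f :: "'a::euclidean_space \<Rightarrow> real"
  assumes f: "smooth_on S f" and h: "h > 0"
    and inS: "\<And>\<sigma>. 0 \<le> \<sigma> \<Longrightarrow> \<sigma> \<le> h \<Longrightarrow> p + \<sigma> *\<^sub>R b \<in> S"
  shows "\<exists>\<sigma>. 0 < \<sigma> \<and> \<sigma> < h \<and> f (p + h *\<^sub>R b) - f p = h * dirderiv f (p + \<sigma> *\<^sub>R b) b"
proof -
  have D: "((\<lambda>\<sigma>. f (p + \<sigma> *\<^sub>R b)) has_real_derivative dirderiv f (p + \<sigma> *\<^sub>R b) b) (at \<sigma>)"
    if "0 \<le> \<sigma>" "\<sigma> \<le> h" for \<sigma>
    unfolding has_real_derivative_iff_has_vector_derivative
    by (rule line_at) (use smooth_on_line[OF f inS[OF that]] in auto)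
  have "continuous_on {0..h} (\<lambda>\<sigma>. f (p + \<sigma> *\<^sub>R b))"
    using D by (intro continuous_at_imp_continuous_on ballI DERIV_isCont) auto
  moreover have "\<And>x. 0 < x \<Longrightarrow> x < h \<Longrightarrow> (\<lambda>\<sigma>. f (p + \<sigma> *\<^sub>R b)) differentiable (at x)"
    using D real_differentiable_def by (meson less_eq_real_def)
  ultimately obtain l z where "0 < z" "z < h" "DERIV (\<lambda>\<sigma>. f (p + \<sigma> *\<^sub>R b)) z :> l"
    "f (p + h *\<^sub>R b) - f (p + 0 *\<^sub>R b) = (h - 0) * l"
    using MVT[OF h] by blast
  moreover have "l = dirderiv f (p + z *\<^sub>R b) b"
    using D[of z] calculation DERIV_unique by (meson less_eq_real_def)
  ultimately show ?thesis by auto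
qed

lemma clairaut_real:
  fixes f :: "'a::euclidean_space \<Rightarrow> real"
  assumes f: "smooth_on S f" and x: "x \<in> S"
  shows "dirderiv (\<lambda>q. dirderiv f q v) x w = dirderiv (\<lambda>q. dirderiv f q w) x v"
proof -
  have S: "open S" using f smooth_on_open by blast
  obtain r where r: "r > 0" "ball x r \<subseteq> S" using S x openE by blast
  define A where "A = (\<lambda>q. dirderiv (\<lambda>q. dirderiv f q v) q w)"
  define B where "B = (\<lambda>q. dirderiv (\<lambda>q. dirderiv f q w) q v)"
  have cA: "continuous_on S A" unfolding A_def
    using smooth_on_cont[OF smooth_on_dd[OF smooth_on_dd[OF f]]] by blast
  have cB: "continuous_on S B" unfolding B_def
    using smooth_on_cont[OF smooth_on_dd[OF smooth_on_dd[OF f]]] by blast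
  define \<Delta> where "\<Delta> = (\<lambda>h. f (x + h *\<^sub>R v + h *\<^sub>R w) - f (x + h *\<^sub>R v) - f (x + h *\<^sub>R w) + f x)"
  have key: "\<exists>\<sigma> \<tau>. 0 < \<sigma> \<and> \<sigma> < h \<and> 0 < \<tau> \<and> \<tau> < h \<and>
      f (x + h *\<^sub>R v + h *\<^sub>R w) - f (x + h *\<^sub>R v) - f (x + h *\<^sub>R w) + f x = h * h * dirderiv (\<lambda>q. dirderiv f q v) (x + \<sigma> *\<^sub>R v + \<tau> *\<^sub>R w) w"
    if h: "h > 0" "h * (norm v + norm w) < r" for h :: real and v w :: 'a
  proof -
    have inS: "x + \<sigma> *\<^sub>R v + \<tau> *\<^sub>R w \<in> S" if "0 \<le> \<sigma>" "\<sigma> \<le> h" "0 \<le> \<tau>" "\<tau> \<le> h" for \<sigma> \<tau>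
    proof -
      have "norm (\<sigma> *\<^sub>R v + \<tau> *\<^sub>R w) \<le> \<sigma> * norm v + \<tau> * norm w"
        using that norm_triangle_ineq[of "\<sigma> *\<^sub>R v" "\<tau> *\<^sub>R w"] by simp
      also have "\<dots> \<le> h * norm v + h * norm w"
        using that by (intro add_mono mult_right_mono) auto
      finally have "norm (\<sigma> *\<^sub>R v + \<tau> *\<^sub>R w) < r" using h by (simp add: distrib_left)
      then have "dist x (x + (\<sigma> *\<^sub>R v + \<tau> *\<^sub>R w)) < r"
        unfolding dist_norm by (metis norm_minus_cancel minus_diff_eq add_diff_cancel_left')
      then have "x + \<sigma> *\<^sub>R v + \<tau> *\<^sub>R w \<in> ball x r" by (simp add: add.assoc)
      then show ?thesis using r by blast
    qed
    define \<phi> where "\<phi> = (\<lambda>\<sigma>. f ((x + h *\<^sub>R w) + \<sigma> *\<^sub>R v) - f (x + \<sigma> *\<^sub>R v))"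
    have D: "(\<phi> has_real_derivative dirderiv f ((x + h *\<^sub>R w) + \<sigma> *\<^sub>R v) v - dirderiv f (x + \<sigma> *\<^sub>R v) v) (at \<sigma>)"
      if "0 \<le> \<sigma>" "\<sigma> \<le> h" for \<sigma>
    proof -
      have a: "(x + h *\<^sub>R w) + \<sigma> *\<^sub>R v \<in> S" using inS[OF that, of h] h by (simp add: algebra_simps)
      have b: "x + \<sigma> *\<^sub>R v \<in> S" using inS[OF that, of 0] h by simp
      show ?thesis unfolding \<phi>_def has_real_derivative_iff_has_vector_derivative
        by (intro has_vector_derivative_diff line_at) (use smooth_on_line[OF f a] smooth_on_line[OF f b] in auto)
    qed
    have "continuous_on {0..h} \<phi>"
      using D by (intro continuous_at_imp_continuous_on ballI DERIV_isCont) auto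
    moreover have "\<And>s. 0 < s \<Longrightarrow> s < h \<Longrightarrow> \<phi> differentiable (at s)"
      using D real_differentiable_def by (meson less_eq_real_def)
    ultimately obtain l \<sigma> where \<sigma>: "0 < \<sigma>" "\<sigma> < h" "DERIV \<phi> \<sigma> :> l" "\<phi> h - \<phi> 0 = (h - 0) * l"
      using MVT[OF h(1)] by blast
    have l: "l = dirderiv f ((x + h *\<^sub>R w) + \<sigma> *\<^sub>R v) v - dirderiv f (x + \<sigma> *\<^sub>R v) v"
      using D[of \<sigma>] \<sigma> DERIV_unique by (meson less_eq_real_def)
    have "\<exists>\<tau>. 0 < \<tau> \<and> \<tau> < h \<and> (\<lambda>q. dirderiv f q v) ((x + \<sigma> *\<^sub>R v) + h *\<^sub>R w) - (\<lambda>q. dirderiv f q v) (x + \<sigma> *\<^sub>R v)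
        = h * dirderiv (\<lambda>q. dirderiv f q v) ((x + \<sigma> *\<^sub>R v) + \<tau> *\<^sub>R w) w"
      by (rule mvt_line[OF smooth_on_dd[OF f] h(1)]) (use inS \<sigma> in auto)
    then obtain \<tau> where \<tau>: "0 < \<tau>" "\<tau> < h" "dirderiv f ((x + \<sigma> *\<^sub>R v) + h *\<^sub>R w) v - dirderiv f (x + \<sigma> *\<^sub>R v) v
        = h * dirderiv (\<lambda>q. dirderiv f q v) ((x + \<sigma> *\<^sub>R v) + \<tau> *\<^sub>R w) w" by auto
    have "f (x + h *\<^sub>R v + h *\<^sub>R w) - f (x + h *\<^sub>R v) - f (x + h *\<^sub>R w) + f x = \<phi> h - \<phi> 0" unfolding \<phi>_def by (simp add: algebra_simps)
    also have "\<dots> = h * l" using \<sigma> by simp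
    also have "l = h * dirderiv (\<lambda>q. dirderiv f q v) ((x + \<sigma> *\<^sub>R v) + \<tau> *\<^sub>R w) w"
      using l \<tau>(3) by (simp add: algebra_simps)
    finally show ?thesis using \<sigma> \<tau> by (intro exI[of _ \<sigma>] exI[of _ \<tau>]) (simp add: algebra_simps)
  qed
  show ?thesis
  proof (rule ccontr)
    assume ne: "\<not> ?thesis"
    then have ne': "A x \<noteq> B x" unfolding A_def B_def by simp
    define e where "e = \<bar>A x - B x\<bar> / 2"
    have e: "e > 0" using ne' by (simp add: e_def)
    obtain dA where dA: "dA > 0" "\<And>y. y \<in> S \<Longrightarrow> dist y x < dA \<Longrightarrow> dist (A y) (A x) < e"
      using cA x e unfolding continuous_on_iff by blast
    obtain dB where dB: "dB > 0" "\<And>y. y \<in> S \<Longrightarrow> dist y x < dB \<Longrightarrow> dist (B y) (B x) < e"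
      using cB x e unfolding continuous_on_iff by blast
    define \<delta> where "\<delta> = min r (min dA dB)"
    have \<delta>: "\<delta> > 0" using r dA dB by (simp add: \<delta>_def)
    define h where "h = \<delta> / (2 * (norm v + norm w + 1))"
    have nvw: "norm v + norm w + 1 > 0" by (simp add: add_nonneg_pos)
    have h0: "h > 0" using \<delta> nvw unfolding h_def by simp
    have hlt: "h * (norm v + norm w) < \<delta>"
    proof -
      have "h * (norm v + norm w) < h * (norm v + norm w + 1)" using h0 by simp
      also have "\<dots> = \<delta> / 2" unfolding h_def using nvw by (simp add: field_simps)
      finally show ?thesis using \<delta> by simp
    qed
    have pt: "y \<in> S \<and> dist y x < dA \<and> dist y x < dB"
      if "y = x + \<sigma> *\<^sub>R a + \<tau> *\<^sub>R c" "0 \<le> \<sigma>" "\<sigma> \<le> h" "0 \<le> \<tau>" "\<tau> \<le> h" "norm a + norm c = norm v + norm w"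
      for y \<sigma> \<tau> a c
    proof -
      have "norm (\<sigma> *\<^sub>R a + \<tau> *\<^sub>R c) \<le> \<sigma> * norm a + \<tau> * norm c"
        using that norm_triangle_ineq[of "\<sigma> *\<^sub>R a" "\<tau> *\<^sub>R c"] by simp
      also have "\<dots> \<le> h * norm a + h * norm c"
        using that by (intro add_mono mult_right_mono) auto
      finally have "norm (\<sigma> *\<^sub>R a + \<tau> *\<^sub>R c) < \<delta>" using hlt that(6) by (simp add: distrib_left[symmetric])
      then have "dist (x + (\<sigma> *\<^sub>R a + \<tau> *\<^sub>R c)) x < \<delta>"
        by (simp only: dist_norm add_diff_cancel_left')
      then have "dist y x < \<delta>" using that(1) by (simp add: add.assoc)
      then show ?thesis using r unfolding \<delta>_def by (auto simp: dist_commute)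
    qed
    have hr: "h * (norm v + norm w) < r" using hlt \<delta>_def by linarith
    obtain \<sigma>1 \<tau>1 where 1: "0 < \<sigma>1" "\<sigma>1 < h" "0 < \<tau>1" "\<tau>1 < h"
      "\<Delta> h = h * h * A (x + \<sigma>1 *\<^sub>R v + \<tau>1 *\<^sub>R w)"
      using key[OF h0 hr] unfolding A_def \<Delta>_def by blast
    have hr': "h * (norm w + norm v) < r" using hr by (simp add: add.commute)
    obtain \<sigma>2 \<tau>2 where 2: "0 < \<sigma>2" "\<sigma>2 < h" "0 < \<tau>2" "\<tau>2 < h"
      "f (x + h *\<^sub>R w + h *\<^sub>R v) - f (x + h *\<^sub>R w) - f (x + h *\<^sub>R v) + f x = h * h * B (x + \<sigma>2 *\<^sub>R w + \<tau>2 *\<^sub>R v)"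
      using key[OF h0 hr'] unfolding B_def by blast
    have "\<Delta> h = f (x + h *\<^sub>R w + h *\<^sub>R v) - f (x + h *\<^sub>R w) - f (x + h *\<^sub>R v) + f x"
      unfolding \<Delta>_def by (simp add: algebra_simps)
    then have eqAB: "A (x + \<sigma>1 *\<^sub>R v + \<tau>1 *\<^sub>R w) = B (x + \<sigma>2 *\<^sub>R w + \<tau>2 *\<^sub>R v)"
      using 1(5) 2(5) h0 by simp
    have a1: "dist (A (x + \<sigma>1 *\<^sub>R v + \<tau>1 *\<^sub>R w)) (A x) < e"
      using pt[of _ \<sigma>1 v \<tau>1 w] 1 dA by auto
    have b1: "dist (B (x + \<sigma>2 *\<^sub>R w + \<tau>2 *\<^sub>R v)) (B x) < e"
      using pt[of _ \<sigma>2 w \<tau>2 v] 2 dB by (auto simp: add.commute)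
    from a1 b1 eqAB have "\<bar>A x - B x\<bar> < 2 * e" by (simp add: dist_real_def)
    then show False by (simp add: e_def)
  qed
qed



definition goodf :: "'a::euclidean_space set \<Rightarrow> ('a \<Rightarrow> 'b::real_normed_vector) \<Rightarrow> bool" where
  "goodf S h \<longleftrightarrow> continuous_on S h \<and> (\<forall>x\<in>S. \<forall>v. (\<lambda>t. h (x + t *\<^sub>R v)) differentiable (at 0))"

lemma goodf_transfer:
  assumes "goodf S h" "open S" "\<And>x. x \<in> S \<Longrightarrow> h x = h' x"
  shows "goodf S h'"
  unfolding goodf_def
proof (intro conjI ballI allI)
  show "continuous_on S h'" using assms continuous_on_cong unfolding goodf_def by metis
  fix x v assume x: "x \<in> S"
  have ev: "eventually (\<lambda>t. h (x + t *\<^sub>R v) = h' (x + t *\<^sub>R v)) (nhds 0)"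
    using ev_line[OF assms(2) x, of v] by eventually_elim (use assms(3) in auto)
  obtain D where D: "((\<lambda>t. h (x + t *\<^sub>R v)) has_vector_derivative D) (at 0)"
    using assms(1) x unfolding goodf_def by (meson vector_derivative_works)
  have "((\<lambda>t. h' (x + t *\<^sub>R v)) has_vector_derivative D) (at 0)"
    using has_vector_derivative_cong_ev[where S=UNIV and x=0 and f="\<lambda>t. h (x + t *\<^sub>R v)" and g="\<lambda>t. h' (x + t *\<^sub>R v)"] ev D
      assms(3) x by (auto simp: eventually_mono[OF ev])
  then show "(\<lambda>t. h' (x + t *\<^sub>R v)) differentiable at 0" using differentiableI_vector by blast
qed

lemma dd_local_eq:
  assumes "open S" "x \<in> S" "\<And>y. y \<in> S \<Longrightarrow> h y = h' y"
  shows "dirderiv h x v = dirderiv h' x v"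
proof -
  have ev: "eventually (\<lambda>t. h (x + t *\<^sub>R v) = h' (x + t *\<^sub>R v)) (nhds 0)"
    using ev_line[OF assms(1,2), of v] by eventually_elim (use assms(3) in auto)
  show ?thesis unfolding dirderiv_def
    by (rule vector_derivative_cong_eq) (use ev in \<open>auto elim: eventually_mono\<close>)
qed

definition ksm :: "'a::euclidean_space set \<Rightarrow> nat \<Rightarrow> ('a \<Rightarrow> 'b::real_normed_vector) \<Rightarrow> bool" where
  "ksm S k f \<longleftrightarrow> (\<forall>vs. length vs \<le> k \<longrightarrow> goodf S (iter_dd f vs))"

lemma smooth_on_iff_ksm: "smooth_on S f \<longleftrightarrow> open S \<and> (\<forall>k. ksm S k f)"
  unfolding smooth_on_def ksm_def goodf_def by blast

lemma smooth_ksm: "smooth_on S f \<Longrightarrow> ksm S k f"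
  using smooth_on_iff_ksm by blast

lemma ksm_add:
  fixes a b :: "'a::euclidean_space \<Rightarrow> 'b::real_normed_vector"
  assumes S: "open S" and a: "ksm S k a" and b: "ksm S k b"
  shows "\<And>vs x. length vs \<le> k \<Longrightarrow> x \<in> S \<Longrightarrow> iter_dd (\<lambda>x. a x + b x) vs x = iter_dd a vs x + iter_dd b vs x"
    and "ksm S k (\<lambda>x. a x + b x)"
proof -
  show eq: "iter_dd (\<lambda>x. a x + b x) vs x = iter_dd a vs x + iter_dd b vs x"
    if "length vs \<le> k" "x \<in> S" for vs x
    using that
  proof (induction vs arbitrary: x)
    case Nil then show ?case by simp
  next
    case (Cons v vs)
    have ga: "goodf S (iter_dd a vs)" and gb: "goodf S (iter_dd b vs)"
      using a b Cons.prems unfolding ksm_def by auto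
    have ev: "eventually (\<lambda>t. iter_dd (\<lambda>x. a x + b x) vs (x + t *\<^sub>R v) = iter_dd a vs (x + t *\<^sub>R v) + iter_dd b vs (x + t *\<^sub>R v)) (nhds 0)"
      using ev_line[OF S Cons.prems(2), of v] by eventually_elim (use Cons in auto)
    have da: "((\<lambda>t. iter_dd a vs (x + t *\<^sub>R v)) has_vector_derivative dirderiv (iter_dd a vs) x v) (at 0)"
      using ga Cons.prems unfolding goodf_def by (intro dd_has) auto
    have db: "((\<lambda>t. iter_dd b vs (x + t *\<^sub>R v)) has_vector_derivative dirderiv (iter_dd b vs) x v) (at 0)"
      using gb Cons.prems unfolding goodf_def by (intro dd_has) auto
    have "((\<lambda>t. iter_dd a vs (x + t *\<^sub>R v) + iter_dd b vs (x + t *\<^sub>R v)) has_vector_derivative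
        dirderiv (iter_dd a vs) x v + dirderiv (iter_dd b vs) x v) (at 0)"
      by (rule has_vector_derivative_add[OF da db])
    then have "((\<lambda>t. iter_dd (\<lambda>x. a x + b x) vs (x + t *\<^sub>R v)) has_vector_derivative
        dirderiv (iter_dd a vs) x v + dirderiv (iter_dd b vs) x v) (at 0)"
      using has_vector_derivative_cong_ev[where S=UNIV and x=0 and g="\<lambda>t. iter_dd (\<lambda>x. a x + b x) vs (x + t *\<^sub>R v)"
          and f="\<lambda>t. iter_dd a vs (x + t *\<^sub>R v) + iter_dd b vs (x + t *\<^sub>R v)"] ev Cons
      by (auto simp: eventually_mono[OF ev])
    then show ?case unfolding iter_dd.simps dirderiv_def[of "iter_dd (\<lambda>x. a x + b x) vs"]
      by (simp add: vector_derivative_at dirderiv_def)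
  qed
  show "ksm S k (\<lambda>x. a x + b x)"
    unfolding ksm_def
  proof (intro allI impI)
    fix vs :: "'a list" assume l: "length vs \<le> k"
    have "goodf S (\<lambda>x. iter_dd a vs x + iter_dd b vs x)"
      using a b l unfolding ksm_def goodf_def
      by (auto intro!: continuous_on_add differentiable_add)
    then show "goodf S (iter_dd (\<lambda>x. a x + b x) vs)"
      by (rule goodf_transfer[OF _ S]) (use eq l in auto)
  qed
qed

lemma line_mult:
  fixes f g :: "'a::euclidean_space \<Rightarrow> real"
  assumes "smooth_on S f" "smooth_on S g" "x \<in> S"
  shows "((\<lambda>t. f (x + t *\<^sub>R v) * g (x + t *\<^sub>R v)) has_vector_derivative
     dirderiv f x v * g x + f x * dirderiv g x v) (at 0)"
proof -
  have A: "((\<lambda>t. f (x + t *\<^sub>R v)) has_real_derivative dirderiv f x v) (at 0)"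
    using smooth_on_has_dd[OF assms(1,3), of v] by (simp add: has_real_derivative_iff_has_vector_derivative)
  have B: "((\<lambda>t. g (x + t *\<^sub>R v)) has_real_derivative dirderiv g x v) (at 0)"
    using smooth_on_has_dd[OF assms(2,3), of v] by (simp add: has_real_derivative_iff_has_vector_derivative)
  have "((\<lambda>t. f (x + t *\<^sub>R v) * g (x + t *\<^sub>R v)) has_real_derivative
     dirderiv f x v * g (x + 0 *\<^sub>R v) + dirderiv g x v * f (x + 0 *\<^sub>R v)) (at 0)"
    by (rule DERIV_mult[OF A B])
  then have "((\<lambda>t. f (x + t *\<^sub>R v) * g (x + t *\<^sub>R v)) has_real_derivative
     dirderiv f x v * g x + f x * dirderiv g x v) (at 0)"
    by (simp add: mult.commute)
  then show ?thesis by (simp add: has_real_derivative_iff_has_vector_derivative)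
qed

lemma ksm_mult:
  fixes f g :: "'a::euclidean_space \<Rightarrow> real"
  shows "smooth_on S f \<Longrightarrow> smooth_on S g \<Longrightarrow> ksm S k (\<lambda>x. f x * g x)"
proof (induction k arbitrary: f g)
  case 0
  have S: "open S" using 0 smooth_on_open by blast
  show ?case unfolding ksm_def goodf_def
    using line_mult[OF 0] smooth_on_cont[OF 0(1)] smooth_on_cont[OF 0(2)]
    by (auto intro!: continuous_on_mult differentiableI_vector)
next
  case (Suc k)
  have S: "open S" using Suc smooth_on_open by blast
  show ?case unfolding ksm_def
  proof (intro allI impI)
    fix vs :: "'a list" assume l: "length vs \<le> Suc k"
    show "goodf S (iter_dd (\<lambda>x. f x * g x) vs)"
    proof (cases "length vs \<le> k")
      case True
      then show ?thesis using Suc.IH[OF Suc.prems] unfolding ksm_def by blast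
    next
      case False
      then have lk: "length vs = Suc k" using l by simp
      then obtain ws v where vs: "vs = ws @ [v]" by (metis length_Suc_conv_rev)
      have lws: "length ws = k" using lk vs by simp
      define p where "p = (\<lambda>x. dirderiv f x v * g x)"
      define q where "q = (\<lambda>x. f x * dirderiv g x v)"
      have kp: "ksm S k p" unfolding p_def by (rule Suc.IH[OF smooth_on_dd[OF Suc.prems(1)] Suc.prems(2)])
      have kq: "ksm S k q" unfolding q_def by (rule Suc.IH[OF Suc.prems(1) smooth_on_dd[OF Suc.prems(2)]])
      have e1: "iter_dd (\<lambda>x. f x * g x) [v] x = p x + q x" if "x \<in> S" for x
        using line_mult[OF Suc.prems that, of v] unfolding p_def q_def
        by (simp add: dirderiv_def vector_derivative_at)
      have e2: "iter_dd (iter_dd (\<lambda>x. f x * g x) [v]) ws x = iter_dd (\<lambda>x. p x + q x) ws x" if "x \<in> S" for x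
        by (rule iter_dd_local[OF S e1 that])
      have "goodf S (iter_dd (\<lambda>x. p x + q x) ws)"
        using ksm_add(2)[OF S kp kq] lws unfolding ksm_def by blast
      then show ?thesis
        by (rule goodf_transfer[OF _ S]) (use e2 in \<open>simp add: vs iter_dd_append[symmetric]\<close>)
    qed
  qed
qed

lemma smooth_mult:
  fixes f g :: "'a::euclidean_space \<Rightarrow> real"
  assumes "smooth_on S f" "smooth_on S g"
  shows "smooth_on S (\<lambda>x. f x * g x)"
  using ksm_mult[OF assms] smooth_on_open[OF assms(1)] smooth_on_iff_ksm by blast



lemma hvd_nth:
  "(\<phi> has_vector_derivative D) (at t) \<Longrightarrow> ((\<lambda>s. \<phi> s $ i) has_vector_derivative D $ i) (at t)"
  unfolding has_vector_derivative_def
  using bounded_linear.has_derivative[OF bounded_linear_vec_nth, of \<phi> "\<lambda>s. s *\<^sub>R D" "at t" i]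
  by simp

lemma iter_dd_comp:
  fixes f :: "'a::euclidean_space \<Rightarrow> real^'m"
  assumes f: "smooth_on S f"
  shows "x \<in> S \<Longrightarrow> iter_dd (\<lambda>x. f x $ i) vs x = iter_dd f vs x $ i"
proof (induction vs arbitrary: x)
  case Nil then show ?case by simp
next
  case (Cons v vs)
  have S: "open S" using f smooth_on_open by blast
  have ev: "eventually (\<lambda>t. iter_dd (\<lambda>x. f x $ i) vs (x + t *\<^sub>R v) = iter_dd f vs (x + t *\<^sub>R v) $ i) (nhds 0)"
    using ev_line[OF S Cons.prems, of v] by eventually_elim (use Cons in auto)
  have "((\<lambda>t. iter_dd f vs (x + t *\<^sub>R v) $ i) has_vector_derivative dirderiv (iter_dd f vs) x v $ i) (at 0)"
    by (intro hvd_nth smooth_on_has_dd[OF smooth_on_iter[OF f] Cons.prems])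
  then have "((\<lambda>t. iter_dd (\<lambda>x. f x $ i) vs (x + t *\<^sub>R v)) has_vector_derivative dirderiv (iter_dd f vs) x v $ i) (at 0)"
    using has_vector_derivative_cong_ev[where S=UNIV and x=0 and g="\<lambda>t. iter_dd (\<lambda>x. f x $ i) vs (x + t *\<^sub>R v)"
          and f="\<lambda>t. iter_dd f vs (x + t *\<^sub>R v) $ i"] ev Cons
    by (auto simp: eventually_mono[OF ev])
  then show ?case unfolding iter_dd.simps dirderiv_def[of "iter_dd (\<lambda>x. f x $ i) vs"]
    by (simp add: vector_derivative_at dirderiv_def)
qed

lemma smooth_comp:
  fixes f :: "'a::euclidean_space \<Rightarrow> real^'m"
  assumes f: "smooth_on S f"
  shows "smooth_on S (\<lambda>x. f x $ i)"
proof -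
  have S: "open S" using f smooth_on_open by blast
  have "ksm S k (\<lambda>x. f x $ i)" for k
    unfolding ksm_def
  proof (intro allI impI)
    fix vs :: "'a list"
    have "goodf S (\<lambda>x. iter_dd f vs x $ i)"
      unfolding goodf_def
    proof (intro conjI ballI allI)
      show "continuous_on S (\<lambda>x. iter_dd f vs x $ i)"
        using smooth_on_cont[OF smooth_on_iter[OF f]] by (intro continuous_intros)
      fix x v assume "x \<in> S"
      then show "(\<lambda>t. iter_dd f vs (x + t *\<^sub>R v) $ i) differentiable at 0"
        using hvd_nth[OF smooth_on_has_dd[OF smooth_on_iter[OF f]]] differentiableI_vector by blast
    qed
    then show "goodf S (iter_dd (\<lambda>x. f x $ i) vs)"
      by (rule goodf_transfer[OF _ S]) (use iter_dd_comp[OF f] in auto)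
  qed
  then show ?thesis using smooth_on_iff_ksm S by blast
qed

lemma clairaut_vec:
  fixes f :: "'a::euclidean_space \<Rightarrow> real^'m"
  assumes f: "smooth_on S f" and x: "x \<in> S"
  shows "dirderiv (\<lambda>q. dirderiv f q v) x w = dirderiv (\<lambda>q. dirderiv f q w) x v"
proof -
  have "iter_dd f [w, v] x $ i = iter_dd f [v, w] x $ i" for i
    using iter_dd_comp[OF f x, of i "[w,v]"] iter_dd_comp[OF f x, of i "[v,w]"]
      clairaut_real[OF smooth_comp[OF f] x, of i v w] by simp
  then show ?thesis by (simp add: vec_eq_iff)
qed



lemma line_chain:
  fixes f :: "'a::euclidean_space \<Rightarrow> real"
  assumes f: "smooth_on S f" and p: "p \<in> S" and \<phi>: "DERIV \<phi> \<tau>0 :> \<phi>'" and z: "\<phi> \<tau>0 = 0"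
  shows "DERIV (\<lambda>\<tau>. f (p + \<phi> \<tau> *\<^sub>R v)) \<tau>0 :> dirderiv f p v * \<phi>'"
proof -
  have "DERIV (\<lambda>h. f (p + h *\<^sub>R v)) (\<phi> \<tau>0) :> dirderiv f p v"
    using smooth_on_has_dd[OF f p, of v] z by (simp add: has_real_derivative_iff_has_vector_derivative)
  from DERIV_chain2[OF this \<phi>] show ?thesis .
qed

lemma deriv_dd:
  fixes f :: "'a::euclidean_space \<Rightarrow> real"
  assumes f: "smooth_on S f" and p: "p \<in> S"
    and ev: "eventually (\<lambda>\<tau>. \<phi> \<tau> = f (p + (\<tau> - t) *\<^sub>R v)) (nhds t)"
  shows "deriv \<phi> t = dirderiv f p v"
proof -
  have d: "DERIV (\<lambda>\<tau>::real. \<tau> - t) t :> 1" by (auto intro!: derivative_eq_intros)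
  have "DERIV (\<lambda>\<tau>. f (p + (\<tau> - t) *\<^sub>R v)) t :> dirderiv f p v * 1"
    by (rule line_chain[OF f p d]) simp
  then have "DERIV \<phi> t :> dirderiv f p v"
    using DERIV_cong_ev[OF refl ev refl] by simp
  then show ?thesis by (rule DERIV_imp_deriv)
qed

lemma hom_dd:
  fixes f :: "'a::euclidean_space \<Rightarrow> real"
  assumes f: "smooth_on S f" and p: "p \<in> S"
    and ev: "eventually (\<lambda>k. f (p + (k - 1) *\<^sub>R v) = k ^ m * f p) (nhds 1)"
  shows "dirderiv f p v = real m * f p"
proof -
  have d: "DERIV (\<lambda>k::real. k - 1) 1 :> 1" by (auto intro!: derivative_eq_intros)
  have "DERIV (\<lambda>k. f (p + (k - 1) *\<^sub>R v)) 1 :> dirderiv f p v * 1"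
    by (rule line_chain[OF f p d]) simp
  then have A: "DERIV (\<lambda>k. k ^ m * f p) 1 :> dirderiv f p v"
    using DERIV_cong_ev[OF refl ev refl] by simp
  have B: "DERIV (\<lambda>k::real. k ^ m * f p) 1 :> real m * f p"
    by (auto intro!: derivative_eq_intros)
  show ?thesis using DERIV_unique[OF A B] .
qed

lemma triple_decomp:
  "((a::real), (b::real^'n), (c::real^'n)) = a *\<^sub>R (1, 0, 0) + (\<Sum>k\<in>UNIV. (b $ k) *\<^sub>R (0, axis k 1, 0))
      + (\<Sum>k\<in>UNIV. (c $ k) *\<^sub>R (0, 0, axis k 1))"
proof -
  have b: "(\<Sum>i\<in>UNIV. (b $ i) *\<^sub>R axis i (1::real)) = b"
    using basis_expansion[of b] by (simp add: scalar_mult_eq_scaleR)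
  have c: "(\<Sum>i\<in>UNIV. (c $ i) *\<^sub>R axis i (1::real)) = c"
    using basis_expansion[of c] by (simp add: scalar_mult_eq_scaleR)
  show ?thesis by (simp add: prod_eq_iff fst_sum snd_sum b c)
qed

lemma lin_triple:
  fixes ll :: "real \<times> (real^'n) \<times> (real^'n) \<Rightarrow> real"
  assumes "linear ll"
  shows "ll (a, b, c) = a * ll (1, 0, 0) + (\<Sum>k\<in>UNIV. b $ k * ll (0, axis k 1, 0))
      + (\<Sum>k\<in>UNIV. c $ k * ll (0, 0, axis k 1))"
  apply (subst triple_decomp)
  unfolding linear_add[OF assms] linear_sum[OF assms] linear_scale[OF assms] by simp

lemma lin_Y:
  fixes ll :: "real \<times> (real^'n) \<times> (real^'n) \<Rightarrow> real"
  assumes "linear ll"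
  shows "ll (0, 0, c) = (\<Sum>k\<in>UNIV. c $ k * ll (0, 0, axis k 1))"
  using lin_triple[OF assms, of 0 0 c] by (simp add: linear_0[OF assms])



locale fset =
  fixes F :: "'n::finite tfun" and I :: "real set" and M :: "(real^'n) set"
    and g :: "real \<times> (real^'n) \<times> (real^'n) \<Rightarrow> real" and Ug :: "(real \<times> (real^'n) \<times> (real^'n)) set"
  assumes Ug: "smooth_on Ug g" and AUg: "I \<times> M \<times> (UNIV - {0}) \<subseteq> Ug"
    and gF: "\<And>t u y. t \<in> I \<Longrightarrow> u \<in> M \<Longrightarrow> y \<noteq> 0 \<Longrightarrow> g (t, u, y) = F t u y"
    and hom: "\<And>t u y k. t \<in> I \<Longrightarrow> u \<in> M \<Longrightarrow> k > 0 \<Longrightarrow> F t u (k *\<^sub>R y) = k * F t u y"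
    and pos: "\<And>t u y V. t \<in> I \<Longrightarrow> u \<in> M \<Longrightarrow> y \<noteq> 0 \<Longrightarrow> V \<noteq> 0 \<Longrightarrow> gform F t u y V V > 0"
    and M: "open M"
begin

definition LL where "LL p = g p * g p"
definition eY :: "'n \<Rightarrow> real \<times> (real^'n) \<times> (real^'n)" where "eY j = (0, 0, axis j 1)"
definition eU :: "'n \<Rightarrow> real \<times> (real^'n) \<times> (real^'n)" where "eU j = (0, axis j 1, 0)"
definition eT :: "real \<times> (real^'n) \<times> (real^'n)" where "eT = (1, 0, 0)"
definition L1 where "L1 w p = dirderiv LL p w"
definition L2 where "L2 w v p = dirderiv (\<lambda>q. L1 v q) p w"

lemma LL_smooth: "smooth_on Ug LL"
  unfolding LL_def by (intro smooth_mult Ug)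

lemma L1_smooth: "smooth_on Ug (L1 v)"
  unfolding L1_def by (intro smooth_on_dd LL_smooth)

lemma L2_smooth: "smooth_on Ug (L2 w v)"
  unfolding L2_def by (intro smooth_on_dd L1_smooth)

lemma inUg: "t \<in> I \<Longrightarrow> u \<in> M \<Longrightarrow> y \<noteq> 0 \<Longrightarrow> (t, u, y) \<in> Ug"
  using AUg by auto

lemma LL_F: "t \<in> I \<Longrightarrow> u \<in> M \<Longrightarrow> y \<noteq> 0 \<Longrightarrow> LL (t, u, y) = Lag F t u y"
  by (simp add: LL_def gF Lag_def power2_eq_square)

lemma ev_nz: "y \<noteq> (0::real^'n) \<Longrightarrow> eventually (\<lambda>h::real. y + h *\<^sub>R v \<noteq> 0) (nhds 0)"
  using ev_line[of "UNIV - {0}" y v] by (simp add: open_Diff)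

lemma F1: "t \<in> I \<Longrightarrow> u \<in> M \<Longrightarrow> y \<noteq> 0 \<Longrightarrow> dY j (Lag F) t u y = L1 (eY j) (t, u, y)"
  unfolding dY_def L1_def
  by (rule deriv_dd[OF LL_smooth inUg], assumption+)
     (use ev_nz[of y "axis j 1"] in \<open>auto simp: eY_def LL_F elim!: eventually_mono\<close>)

lemma F2: "t \<in> I \<Longrightarrow> u \<in> M \<Longrightarrow> y \<noteq> 0 \<Longrightarrow> dY i (dY j (Lag F)) t u y = L2 (eY i) (eY j) (t, u, y)"
  unfolding dY_def[of i] L2_def
  by (rule deriv_dd[OF L1_smooth inUg], assumption+)
     (use ev_nz[of y "axis i 1"] in \<open>auto simp: eY_def F1 elim!: eventually_mono\<close>)

lemma F3: "t \<in> I \<Longrightarrow> u \<in> M \<Longrightarrow> y \<noteq> 0 \<Longrightarrow> dU k (Lag F) t u y = L1 (eU k) (t, u, y)"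
  unfolding dU_def L1_def
  by (rule deriv_dd[OF LL_smooth inUg], assumption+)
     (use ev_line[OF M, of u "axis k 1"] in \<open>auto simp: eU_def LL_F elim!: eventually_mono\<close>)

lemma F4: "t \<in> I \<Longrightarrow> u \<in> M \<Longrightarrow> y \<noteq> 0 \<Longrightarrow> dU k (dY j (Lag F)) t u y = L2 (eU k) (eY j) (t, u, y)"
  unfolding dU_def L2_def
  by (rule deriv_dd[OF L1_smooth inUg], assumption+)
     (use ev_line[OF M, of u "axis k 1"] in \<open>auto simp: eU_def F1 elim!: eventually_mono\<close>)

lemma F5: "open J \<Longrightarrow> J \<subseteq> I \<Longrightarrow> t \<in> J \<Longrightarrow> u \<in> M \<Longrightarrow> y \<noteq> 0 \<Longrightarrow> dT (dY j (Lag F)) t u y = L2 eT (eY j) (t, u, y)"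
  unfolding dT_def L2_def
  by (rule deriv_dd[OF L1_smooth inUg]) 
     (use eventually_nhds_in_open[of J t] in \<open>auto simp: eT_def F1 elim!: eventually_mono\<close>)

end


lemma inv_contract:
  fixes gm gi :: "real^'n^'n"
  assumes "\<And>j l. (\<Sum>i\<in>UNIV. gm $ i $ j * gi $ i $ l) = (if j = l then 1 else 0)"
  shows "(\<Sum>i\<in>UNIV. gm $ i $ j * (c * (\<Sum>l\<in>UNIV. gi $ i $ l * R l))) = c * R j"
proof -
  have "(\<Sum>i\<in>UNIV. gm $ i $ j * (c * (\<Sum>l\<in>UNIV. gi $ i $ l * R l)))
      = c * (\<Sum>l\<in>UNIV. (\<Sum>i\<in>UNIV. gm $ i $ j * gi $ i $ l) * R l)"
    apply (simp add: sum_distrib_left sum_distrib_right)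
    apply (subst sum.swap)
    apply (simp add: mult_ac)
    done
  also have "\<dots> = c * R j"
  proof -
    have "\<And>l. (if j = l then 1 else 0) * R l = (if l = j then R l else 0)" by auto
    then show ?thesis by (simp add: assms)
  qed
  finally show ?thesis .
qed

context fset begin

lemma LL_hom: "t \<in> I \<Longrightarrow> u \<in> M \<Longrightarrow> y \<noteq> 0 \<Longrightarrow> k > 0 \<Longrightarrow> LL (t, u, k *\<^sub>R y) = k^2 * LL (t, u, y)"
  by (simp add: LL_F Lag_def hom power_mult_distrib)

lemma E1: assumes "t \<in> I" "u \<in> M" "y \<noteq> 0" shows "L1 (0, 0, y) (t, u, y) = 2 * LL (t, u, y)"
proof -
  have "dirderiv LL (t, u, y) (0, 0, y) = real 2 * LL (t, u, y)"
  proof (rule hom_dd[OF LL_smooth inUg[OF assms]])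
    have "eventually (\<lambda>k::real. k \<in> {0<..}) (nhds 1)" by (rule eventually_nhds_in_open) auto
    then show "eventually (\<lambda>k. LL ((t, u, y) + (k - 1) *\<^sub>R (0, 0, y)) = k ^ 2 * LL (t, u, y)) (nhds 1)"
    proof eventually_elim
      case (elim k)
      have "(t, u, y) + (k - 1) *\<^sub>R (0, 0, y) = (t, u, k *\<^sub>R y)" by (simp add: algebra_simps)
      then show ?case using LL_hom[OF assms elim[simplified]] by simp
    qed
  qed
  then show ?thesis by (simp add: L1_def)
qed

lemma L1_hom:
  assumes "t \<in> I" "u \<in> M" "y \<noteq> 0" "k > 0"
  shows "L1 (eY j) (t, u, k *\<^sub>R y) = k * L1 (eY j) (t, u, y)"
proof -
  have ky: "k *\<^sub>R y \<noteq> 0" using assms(3,4) by simp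
  have d0: "DERIV (\<lambda>h::real. h) 0 :> 1" by (auto intro!: derivative_eq_intros)
  have A: "DERIV (\<lambda>h. LL ((t, u, k *\<^sub>R y) + h *\<^sub>R eY j)) 0 :> L1 (eY j) (t, u, k *\<^sub>R y) * 1"
    unfolding L1_def by (rule line_chain[OF LL_smooth inUg[OF assms(1,2) ky] d0]) simp
  have dk: "DERIV (\<lambda>h::real. h / k) 0 :> 1 / k" using assms(4) by (auto intro!: derivative_eq_intros)
  have B: "DERIV (\<lambda>h. LL ((t, u, y) + (h / k) *\<^sub>R eY j)) 0 :> L1 (eY j) (t, u, y) * (1 / k)"
    unfolding L1_def by (rule line_chain[OF LL_smooth inUg[OF assms(1,2,3)] dk]) simp
  have B': "DERIV (\<lambda>h. k^2 * LL ((t, u, y) + (h / k) *\<^sub>R eY j)) 0 :> k^2 * (L1 (eY j) (t, u, y) * (1 / k))"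
    by (rule DERIV_cmult[OF B])
  have ev: "eventually (\<lambda>h. LL ((t, u, k *\<^sub>R y) + h *\<^sub>R eY j) = k^2 * LL ((t, u, y) + (h / k) *\<^sub>R eY j)) (nhds 0)"
    using ev_nz[OF ky, of "axis j 1"]
  proof eventually_elim
    case (elim h)
    have e: "k *\<^sub>R y + h *\<^sub>R axis j 1 = k *\<^sub>R (y + (h / k) *\<^sub>R axis j 1)"
      using assms(4) by (simp add: algebra_simps)
    then have nz: "y + (h / k) *\<^sub>R axis j 1 \<noteq> 0" using elim by auto
    show ?case using LL_hom[OF assms(1,2) nz assms(4)] e by (simp add: eY_def)
  qed
  have "DERIV (\<lambda>h. LL ((t, u, k *\<^sub>R y) + h *\<^sub>R eY j)) 0 :> k^2 * (L1 (eY j) (t, u, y) * (1 / k))"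
    using DERIV_cong_ev[OF refl ev refl] B' by simp
  from DERIV_unique[OF A this] show ?thesis using assms(4) by (simp add: power2_eq_square)
qed

lemma E2: assumes "t \<in> I" "u \<in> M" "y \<noteq> 0" shows "L2 (0, 0, y) (eY j) (t, u, y) = L1 (eY j) (t, u, y)"
proof -
  have "dirderiv (L1 (eY j)) (t, u, y) (0, 0, y) = real 1 * L1 (eY j) (t, u, y)"
  proof (rule hom_dd[OF L1_smooth inUg[OF assms]])
    have "eventually (\<lambda>k::real. k \<in> {0<..}) (nhds 1)" by (rule eventually_nhds_in_open) auto
    then show "eventually (\<lambda>k. L1 (eY j) ((t, u, y) + (k - 1) *\<^sub>R (0, 0, y)) = k ^ 1 * L1 (eY j) (t, u, y)) (nhds 1)"
    proof eventually_elim
      case (elim k)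
      have "(t, u, y) + (k - 1) *\<^sub>R (0, 0, y) = (t, u, k *\<^sub>R y)" by (simp add: algebra_simps)
      then show ?case using L1_hom[OF assms elim[simplified]] by simp
    qed
  qed
  then show ?thesis by (simp add: L2_def)
qed

lemma L1_lin: "p \<in> Ug \<Longrightarrow> linear (\<lambda>v. L1 v p)"
  unfolding L1_def using smooth_on_deriv(2)[OF LL_smooth] by blast

lemma L2_lin: "p \<in> Ug \<Longrightarrow> linear (\<lambda>w. L2 w v p)"
  unfolding L2_def using smooth_on_deriv(2)[OF L1_smooth] by blast

lemma E1': assumes "t \<in> I" "u \<in> M" "y \<noteq> 0"
  shows "(\<Sum>i\<in>UNIV. y $ i * L1 (eY i) (t, u, y)) = 2 * LL (t, u, y)"
  using lin_Y[OF L1_lin[OF inUg[OF assms]], of y] E1[OF assms] by (simp add: eY_def)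

lemma E2': assumes "t \<in> I" "u \<in> M" "y \<noteq> 0"
  shows "(\<Sum>i\<in>UNIV. y $ i * L2 (eY i) (eY j) (t, u, y)) = L1 (eY j) (t, u, y)"
  using lin_Y[OF L2_lin[OF inUg[OF assms]], of y] E2[OF assms] by (simp add: eY_def)

lemma L2_sym: "p \<in> Ug \<Longrightarrow> L2 w v p = L2 v w p"
  unfolding L2_def L1_def by (rule clairaut_real[OF LL_smooth])

lemma gmat_eq: "t \<in> I \<Longrightarrow> u \<in> M \<Longrightarrow> y \<noteq> 0 \<Longrightarrow> gmat F t u y $ i $ j = 1/2 * L2 (eY i) (eY j) (t, u, y)"
  by (simp add: gmat_def F2)

lemma gmat_sym: "t \<in> I \<Longrightarrow> u \<in> M \<Longrightarrow> y \<noteq> 0 \<Longrightarrow> gmat F t u y $ i $ j = gmat F t u y $ j $ i"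
  using gmat_eq L2_sym inUg by metis

lemma gmat_y: assumes "t \<in> I" "u \<in> M" "y \<noteq> 0"
  shows "(\<Sum>i\<in>UNIV. gmat F t u y $ i $ j * y $ i) = 1/2 * L1 (eY j) (t, u, y)"
  using E2'[OF assms, of j] by (simp add: gmat_eq[OF assms] sum_divide_distrib[symmetric] mult_ac)

lemma gform_yW: assumes "t \<in> I" "u \<in> M" "y \<noteq> 0"
  shows "gform F t u y y W = (\<Sum>j\<in>UNIV. 1/2 * L1 (eY j) (t, u, y) * W $ j)"
proof -
  have "gform F t u y y W = (\<Sum>j\<in>UNIV. (\<Sum>i\<in>UNIV. gmat F t u y $ i $ j * y $ i) * W $ j)"
    unfolding gform_def by (subst sum.swap) (simp add: sum_distrib_right sum_distrib_left mult_ac)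
  then show ?thesis using gmat_y[OF assms] by simp
qed

lemma gform_yy: assumes "t \<in> I" "u \<in> M" "y \<noteq> 0"
  shows "gform F t u y y y = LL (t, u, y)"
proof -
  have "gform F t u y y y = 1/2 * (\<Sum>j\<in>UNIV. y $ j * L1 (eY j) (t, u, y))"
    unfolding gform_yW[OF assms] by (simp add: sum_distrib_left mult_ac)
  then show ?thesis using E1'[OF assms] by simp
qed

lemma gform_VW: "gform F t u y V W = (\<Sum>j\<in>UNIV. (\<Sum>i\<in>UNIV. gmat F t u y $ i $ j * V $ i) * W $ j)"
  unfolding gform_def by (subst sum.swap) (simp add: sum_distrib_right sum_distrib_left mult_ac)

lemma ginv_prop: assumes "t \<in> I" "u \<in> M" "y \<noteq> 0"
  shows "(\<Sum>i\<in>UNIV. gmat F t u y $ i $ j * ginv F t u y $ i $ l) = (if j = l then 1 else 0)"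
proof -
  define gm where "gm = gmat F t u y"
  have ker: "\<forall>x. gm *v x = 0 \<longrightarrow> x = 0"
  proof (intro allI impI)
    fix x assume x: "gm *v x = 0"
    have "gform F t u y x x = (\<Sum>i\<in>UNIV. x $ i * (gm *v x) $ i)"
      unfolding gform_def gm_def matrix_vector_mult_def by (simp add: sum_distrib_left mult_ac)
    then have "gform F t u y x x = 0" using x by simp
    then show "x = 0" using pos[OF assms, of x] by force
  qed
  then obtain B where B: "B ** gm = mat 1" using matrix_left_invertible_ker by blast
  then have "gm ** B = mat 1" using matrix_left_right_inverse by blast
  then have "\<exists>A'. gm ** A' = mat 1 \<and> A' ** gm = mat 1" using B by blast
  then have "gm ** matrix_inv gm = mat 1" unfolding matrix_inv_def by (rule someI_ex[THEN conjunct1])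
  then have "(gm ** matrix_inv gm) $ j $ l = mat 1 $ j $ l" by simp
  then have "(\<Sum>i\<in>UNIV. gm $ j $ i * matrix_inv gm $ i $ l) = (if j = l then 1 else 0)"
    by (simp add: matrix_matrix_mult_def mat_def)
  then show ?thesis using gmat_sym[OF assms] unfolding gm_def ginv_def by simp
qed

end


context fset begin

definition Bv where
  "Bv t u y a j = 1/2 * (\<Sum>i\<in>UNIV. L2 (eY i) (eY j) (t, u, y) * a $ i)
     + 1/2 * ((\<Sum>k\<in>UNIV. L2 (eU k) (eY j) (t, u, y) * y $ k) - L1 (eU j) (t, u, y))
     + 1/2 * L2 eT (eY j) (t, u, y)"

lemma Bform:
  assumes J: "open J" "J \<subseteq> I" "t \<in> J" and u: "u \<in> M" and y: "y \<noteq> 0"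
  shows "(\<Sum>i\<in>UNIV. gmat F t u y $ i $ j * (a + 2 *\<^sub>R Gspray F t u y + N0 F t u y) $ i) = Bv t u y a j"
proof -
  have tI: "t \<in> I" using J by blast
  define gm where "gm = gmat F t u y"
  define gi where "gi = ginv F t u y"
  have inv: "\<And>j l. (\<Sum>i\<in>UNIV. gm $ i $ j * gi $ i $ l) = (if j = l then 1 else 0)"
    unfolding gm_def gi_def by (rule ginv_prop[OF tI u y])
  define R where "R l = (\<Sum>k\<in>UNIV. dU k (dY l (Lag F)) t u y * y $ k) - dU l (Lag F) t u y" for l
  define Tm where "Tm l = dT (dY l (Lag F)) t u y" for l
  have s1: "(\<Sum>i\<in>UNIV. gm $ i $ j * a $ i) = 1/2 * (\<Sum>i\<in>UNIV. L2 (eY i) (eY j) (t, u, y) * a $ i)"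
    unfolding gm_def by (simp add: gmat_eq[OF tI u y] sum_distrib_left mult_ac)
  have s2: "(\<Sum>i\<in>UNIV. gm $ i $ j * (2 * Gspray F t u y $ i)) = 1/2 * R j"
  proof -
    have "(\<Sum>i\<in>UNIV. gm $ i $ j * (2 * Gspray F t u y $ i))
        = (\<Sum>i\<in>UNIV. gm $ i $ j * (1/2 * (\<Sum>l\<in>UNIV. gi $ i $ l * R l)))"
      unfolding Gspray_def gi_def R_def by simp
    also have "\<dots> = 1/2 * R j" by (rule inv_contract[OF inv])
    finally show ?thesis .
  qed
  have s3: "(\<Sum>i\<in>UNIV. gm $ i $ j * N0 F t u y $ i) = 1/2 * Tm j"
  proof -
    have "(\<Sum>i\<in>UNIV. gm $ i $ j * N0 F t u y $ i)
        = (\<Sum>i\<in>UNIV. gm $ i $ j * (1/2 * (\<Sum>l\<in>UNIV. gi $ i $ l * Tm l)))"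
      unfolding N0_def gi_def Tm_def by simp
    also have "\<dots> = 1/2 * Tm j" by (rule inv_contract[OF inv])
    finally show ?thesis .
  qed
  have "(\<Sum>i\<in>UNIV. gm $ i $ j * (a + 2 *\<^sub>R Gspray F t u y + N0 F t u y) $ i)
      = (\<Sum>i\<in>UNIV. gm $ i $ j * a $ i) + (\<Sum>i\<in>UNIV. gm $ i $ j * (2 * Gspray F t u y $ i))
        + (\<Sum>i\<in>UNIV. gm $ i $ j * N0 F t u y $ i)"
    by (simp add: distrib_left sum.distrib)
  also have "\<dots> = Bv t u y a j"
    unfolding s1 s2 s3 Bv_def R_def Tm_def
    using F3[OF tI u y] F4[OF tI u y] F5[OF J u y] by simp
  finally show ?thesis unfolding gm_def .
qed

lemma F_zero: "t \<in> I \<Longrightarrow> u \<in> M \<Longrightarrow> F t u 0 = 0"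
  using hom[of t u 2 0] by simp

end


locale nset = fset F I M g Ug for F :: "'n::finite tfun" and I M g Ug +
  fixes N :: "(real^'n) set" and t0 T :: real and n :: "real^'n \<Rightarrow> real^'n"
    and \<gamma> :: "real^'n \<Rightarrow> real \<Rightarrow> real^'n" and \<Gamma> :: "(real^'n) \<times> real \<Rightarrow> real^'n" and V
  assumes tT: "t0 < T" "{t0..<T} \<subseteq> I" and NM: "N \<subseteq> M"
    and \<Gamma>V: "smooth_on V \<Gamma>" "N \<times> {t0..<T} \<subseteq> V"
    and \<Gamma>\<gamma>: "\<And>s t. s \<in> N \<Longrightarrow> t \<in> {t0..<T} \<Longrightarrow> \<Gamma> (s, t) = \<gamma> s t"
    and \<gamma>0: "\<And>s. s \<in> N \<Longrightarrow> \<gamma> s t0 = s"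
    and \<gamma>0': "\<And>s. s \<in> N \<Longrightarrow> vector_derivative (\<gamma> s) (at t0 within {t0..<T}) = n s"
    and unit: "\<And>s t. s \<in> N \<Longrightarrow> t \<in> {t0<..<T} \<Longrightarrow> F t (\<gamma> s t) (tvel \<gamma> s t) = 1"
    and n1: "\<And>s. s \<in> N \<Longrightarrow> F t0 s (n s) = 1"
    and orth0: "\<And>s X. s \<in> N \<Longrightarrow> X \<in> tangent_space N s \<Longrightarrow> gform F t0 s (n s) (n s) X = 0"
    and UM: "\<And>s t. s \<in> N \<Longrightarrow> t \<in> {t0<..<T} \<Longrightarrow> \<gamma> s t \<in> M"
begin

definition Gt where "Gt q = dirderiv \<Gamma> q (0, 1)"
definition Gtt where "Gtt q = dirderiv Gt q (0, 1)"
definition P where "P s t = (t, \<Gamma> (s, t), Gt (s, t))"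

lemma Gt_smooth: "smooth_on V Gt"
  unfolding Gt_def by (rule smooth_on_dd[OF \<Gamma>V(1)])

lemma inV: "s \<in> N \<Longrightarrow> t0 \<le> t \<Longrightarrow> t < T \<Longrightarrow> (s, t) \<in> V"
  using \<Gamma>V(2) by auto

lemma vd_t:
  assumes f: "smooth_on V f" and s: "s \<in> N" and t: "t0 \<le> t" "t < T"
  shows "((\<lambda>\<tau>. f (s, \<tau>)) has_vector_derivative dirderiv f (s, t) (0, 1)) (at t)"
proof -
  have "((\<lambda>\<tau>. f ((s, 0) + \<tau> *\<^sub>R (0, 1))) has_vector_derivative dirderiv f ((s, 0) + t *\<^sub>R (0, 1)) (0, 1)) (at t)"
    by (rule line_at) (use smooth_on_line[OF f inV[OF s t], of "(0,1)"] in simp)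
  then show ?thesis by simp
qed

lemma T1: "s \<in> N \<Longrightarrow> t0 \<le> t \<Longrightarrow> t < T \<Longrightarrow> ((\<lambda>\<tau>. \<Gamma> (s, \<tau>)) has_vector_derivative Gt (s, t)) (at t)"
  unfolding Gt_def by (rule vd_t[OF \<Gamma>V(1)])

lemma T2: "s \<in> N \<Longrightarrow> t0 \<le> t \<Longrightarrow> t < T \<Longrightarrow> ((\<lambda>\<tau>. Gt (s, \<tau>)) has_vector_derivative Gtt (s, t)) (at t)"
  unfolding Gtt_def by (rule vd_t[OF Gt_smooth])

lemma T3: assumes s: "s \<in> N" and t: "t \<in> {t0<..<T}" shows "tvel \<gamma> s t = Gt (s, t)"
proof -
  have "((\<gamma> s) has_vector_derivative Gt (s, t)) (at t)"
    by (rule has_vector_derivative_transform_within_open[OF T1[OF s] open_greaterThanLessThan t])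
       (use t \<Gamma>\<gamma>[OF s] in auto)
  then show ?thesis unfolding tvel_def by (rule vector_derivative_at)
qed

lemma T4: assumes s: "s \<in> N" and t: "t \<in> {t0<..<T}" shows "tacc \<gamma> s t = Gtt (s, t)"
proof -
  have "((tvel \<gamma> s) has_vector_derivative Gtt (s, t)) (at t)"
    by (rule has_vector_derivative_transform_within_open[OF T2[OF s] open_greaterThanLessThan t])
       (use t T3[OF s] in auto)
  then show ?thesis unfolding tacc_def by (rule vector_derivative_at)
qed

lemma T5: assumes s: "s \<in> N" shows "Gt (s, t0) = n s"
proof -
  have "((\<lambda>\<tau>. \<Gamma> (s, \<tau>)) has_vector_derivative Gt (s, t0)) (at t0 within {t0..<T})"
    using T1[OF s order.refl tT(1)] by (rule has_vector_derivative_at_within)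
  then have a: "((\<gamma> s) has_vector_derivative Gt (s, t0)) (at t0 within {t0..<T})"
    by (rule has_vector_derivative_transform[rotated 2]) (use tT \<Gamma>\<gamma>[OF s] in auto)
  have nb: "at t0 within {t0..<T} \<noteq> bot"
    using tT(1) trivial_limit_within[of t0 "{t0..<T}"] by simp
  have "((\<gamma> s) has_vector_derivative vector_derivative (\<gamma> s) (at t0 within {t0..<T})) (at t0 within {t0..<T})"
    using a vector_derivative_works differentiableI_vector by blast
  then show ?thesis using vector_derivative_unique_within[OF nb a] \<gamma>0'[OF s] by simp
qed

lemma T6: assumes s: "s \<in> N" and t: "t0 \<le> t" "t < T" shows "Gt (s, t) \<noteq> 0"
proof (cases "t = t0")
  case True
  have "t0 \<in> I" "s \<in> M" using tT NM s by auto
  then have "n s \<noteq> 0" using n1[OF s] F_zero[of t0 s] by auto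
  then show ?thesis using True T5[OF s] by simp
next
  case False
  then have t': "t \<in> {t0<..<T}" using t by auto
  have "F t (\<gamma> s t) (Gt (s, t)) = 1" using unit[OF s t'] T3[OF s t'] by simp
  moreover have "t \<in> I" using tT t' by auto
  ultimately show ?thesis using F_zero[of t "\<gamma> s t"] UM[OF s t'] by auto
qed

lemma \<Gamma>M: assumes s: "s \<in> N" and t: "t0 \<le> t" "t < T" shows "\<Gamma> (s, t) \<in> M"
proof (cases "t = t0")
  case True then show ?thesis using \<Gamma>\<gamma>[OF s] \<gamma>0[OF s] NM s tT by auto
next
  case False then show ?thesis using \<Gamma>\<gamma>[OF s] UM[OF s] t by auto
qed

lemma tI: "t0 \<le> t \<Longrightarrow> t < T \<Longrightarrow> t \<in> I" using tT by auto

lemma T7: "s \<in> N \<Longrightarrow> t0 \<le> t \<Longrightarrow> t < T \<Longrightarrow> P s t \<in> Ug"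
  unfolding P_def by (intro inUg tI \<Gamma>M T6)

lemma T8: assumes s: "s \<in> N" and t: "t \<in> {t0<..<T}" shows "LL (P s t) = 1"
proof -
  have "LL (P s t) = Lag F t (\<Gamma> (s, t)) (Gt (s, t))"
    unfolding P_def using t by (intro LL_F tI \<Gamma>M[OF s] T6[OF s]) auto
  also have "\<dots> = 1" using unit[OF s t] T3[OF s t] \<Gamma>\<gamma>[OF s] t by (simp add: Lag_def)
  finally show ?thesis .
qed

end


lemma smooth_vd_chain:
  fixes f :: "'a::euclidean_space \<Rightarrow> 'b::real_normed_vector"
  assumes f: "smooth_on S f" and \<phi>: "(\<phi> has_vector_derivative w) (at \<tau>)" and inS: "\<phi> \<tau> \<in> S"
  shows "((\<lambda>\<sigma>. f (\<phi> \<sigma>)) has_vector_derivative dirderiv f (\<phi> \<tau>) w) (at \<tau>)"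
proof -
  have D: "(f has_derivative (\<lambda>v. dirderiv f (\<phi> \<tau>) v)) (at (\<phi> \<tau>))"
    by (rule smooth_on_deriv(1)[OF f inS])
  have L: "linear (\<lambda>v. dirderiv f (\<phi> \<tau>) v)" by (rule smooth_on_deriv(2)[OF f inS])
  have "((\<lambda>\<sigma>. f (\<phi> \<sigma>)) has_derivative (\<lambda>h. dirderiv f (\<phi> \<tau>) (h *\<^sub>R w))) (at \<tau>)"
    using has_derivative_compose[OF \<phi>[unfolded has_vector_derivative_def] D] by (simp add: o_def)
  then show ?thesis unfolding has_vector_derivative_def by (simp add: linear_scale[OF L])
qed

lemma vd_real: "((\<phi>::real \<Rightarrow> real) has_vector_derivative D) (at \<tau>) \<Longrightarrow> DERIV \<phi> \<tau> :> D"
  by (simp add: has_real_derivative_iff_has_vector_derivative)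

context nset begin

definition Zf where "Zf s X t = dirderiv \<Gamma> (s, t) (X, 0)"
definition Wf where "Wf s X t = dirderiv Gt (s, t) (X, 0)"
definition hh where "hh s X t = (\<Sum>j\<in>UNIV. 1/2 * L1 (eY j) (P s t) * (Zf s X t $ j))"

definition curve where "curve s c X \<longleftrightarrow> c 0 = s \<and> (\<forall>h. c h \<in> N) \<and> (c has_vector_derivative X) (at 0)"

lemma curve_tangent: "X \<in> tangent_space N s \<Longrightarrow> \<exists>c. curve s c X"
  unfolding tangent_space_def curve_def by blast

lemma C1:
  assumes f: "smooth_on V f" and s: "s \<in> N" and t: "t0 \<le> t" "t < T" and c: "curve s c X"
  shows "((\<lambda>h. f (c h, t)) has_vector_derivative dirderiv f (s, t) (X, 0)) (at 0)"
proof -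
  have "((\<lambda>h. (c h, t)) has_vector_derivative (X, 0)) (at 0)"
    using c unfolding curve_def by (auto intro!: derivative_eq_intros)
  from smooth_vd_chain[OF f this] show ?thesis using c inV[OF s t] unfolding curve_def by simp
qed

lemma C2:
  assumes s: "s \<in> N" and c: "curve s c X"
  shows "Zf s X t0 = X"
proof -
  have a: "((\<lambda>h. \<Gamma> (c h, t0)) has_vector_derivative Zf s X t0) (at 0)"
    unfolding Zf_def by (rule C1[OF \<Gamma>V(1) s order.refl tT(1) c])
  have "\<Gamma> (c h, t0) = c h" for h
    using c \<Gamma>\<gamma>[of "c h" t0] \<gamma>0[of "c h"] tT unfolding curve_def by auto
  then have "(c has_vector_derivative Zf s X t0) (at 0)" using a by simp
  then show ?thesis using c vector_derivative_unique_at unfolding curve_def by blast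
qed

lemma C3:
  assumes s: "s \<in> N" and t: "t \<in> {t0<..<T}" and c: "curve s c X"
  shows "(\<Sum>k\<in>UNIV. Zf s X t $ k * L1 (eU k) (P s t)) + (\<Sum>k\<in>UNIV. Wf s X t $ k * L1 (eY k) (P s t)) = 0"
proof -
  have t': "t0 \<le> t" "t < T" using t by auto
  have v: "((\<lambda>h. (t, \<Gamma> (c h, t), Gt (c h, t))) has_vector_derivative (0, Zf s X t, Wf s X t)) (at 0)"
    unfolding Zf_def Wf_def
    by (intro has_vector_derivative_Pair C1[OF \<Gamma>V(1) s t' c] C1[OF Gt_smooth s t' c])
       (auto intro!: derivative_eq_intros)
  have "((\<lambda>h. LL (t, \<Gamma> (c h, t), Gt (c h, t))) has_vector_derivative dirderiv LL (t, \<Gamma> (c 0, t), Gt (c 0, t)) (0, Zf s X t, Wf s X t)) (at 0)"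
    by (rule smooth_vd_chain[OF LL_smooth v]) (use T7[OF s t'] c in \<open>simp add: P_def curve_def\<close>)
  moreover have "LL (t, \<Gamma> (c h, t), Gt (c h, t)) = 1" for h
    using T8[of "c h" t] c t unfolding curve_def P_def by auto
  ultimately have "((\<lambda>h. 1::real) has_vector_derivative L1 (0, Zf s X t, Wf s X t) (P s t)) (at 0)"
    using c unfolding curve_def L1_def P_def by simp
  then have "L1 (0, Zf s X t, Wf s X t) (P s t) = 0"
    using vector_derivative_unique_at[of "\<lambda>h. 1::real"] by (metis has_vector_derivative_const)
  then show ?thesis
    using lin_triple[OF L1_lin[OF T7[OF s t']], of 0 "Zf s X t" "Wf s X t"] by (simp add: eU_def eY_def)
qed

lemma Pvd: assumes s: "s \<in> N" and t: "t0 \<le> t" "t < T"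
  shows "((P s) has_vector_derivative (1, Gt (s, t), Gtt (s, t))) (at t)"
  unfolding P_def
  by (intro has_vector_derivative_Pair T1[OF s t] T2[OF s t]) (auto intro!: derivative_eq_intros)

lemma Zvd: assumes s: "s \<in> N" and t: "t0 \<le> t" "t < T"
  shows "((Zf s X) has_vector_derivative Wf s X t) (at t)"
proof -
  have sm: "smooth_on V (\<lambda>q. dirderiv \<Gamma> q (X, 0))" by (rule smooth_on_dd[OF \<Gamma>V(1)])
  have "((\<lambda>\<tau>. dirderiv \<Gamma> (s, \<tau>) (X, 0)) has_vector_derivative dirderiv (\<lambda>q. dirderiv \<Gamma> q (X, 0)) (s, t) (0, 1)) (at t)"
    by (rule vd_t[OF sm s t])
  moreover have "dirderiv (\<lambda>q. dirderiv \<Gamma> q (X, 0)) (s, t) (0, 1) = Wf s X t"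
    unfolding Wf_def Gt_def using clairaut_vec[OF \<Gamma>V(1) inV[OF s t]] by simp
  ultimately show ?thesis unfolding Zf_def[abs_def] by simp
qed

lemma hh_deriv:
  assumes s: "s \<in> N" and t: "t \<in> {t0<..<T}" and c: "curve s c X"
  shows "DERIV (hh s X) t :> (\<Sum>j\<in>UNIV. Zf s X t $ j * Bv t (\<Gamma> (s, t)) (Gt (s, t)) (Gtt (s, t)) j)"
proof -
  have t': "t0 \<le> t" "t < T" using t by auto
  define p where "p = P s t"
  define y where "y = Gt (s, t)"
  define a where "a = Gtt (s, t)"
  define u where "u = \<Gamma> (s, t)"
  have p: "p = (t, u, y)" unfolding p_def P_def u_def y_def by simp
  have dL: "DERIV (\<lambda>\<tau>. L1 (eY j) (P s \<tau>)) t :> L2 (1, y, a) (eY j) p" for j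
    using smooth_vd_chain[OF L1_smooth Pvd[OF s t'] T7[OF s t']] unfolding L2_def p_def y_def a_def
    by (rule vd_real)
  have dZ: "DERIV (\<lambda>\<tau>. Zf s X \<tau> $ j) t :> Wf s X t $ j" for j
    by (rule vd_real, rule hvd_nth, rule Zvd[OF s t'])
  have D: "DERIV (hh s X) t :> (\<Sum>j\<in>UNIV. 1/2 * L2 (1, y, a) (eY j) p * Zf s X t $ j + 1/2 * L1 (eY j) p * Wf s X t $ j)"
    unfolding hh_def[abs_def]
    by (rule DERIV_sum) (use dL dZ in \<open>auto intro!: derivative_eq_intros simp: p_def\<close>)
  have lin: "L2 (1, y, a) (eY j) p = L2 eT (eY j) p + (\<Sum>k\<in>UNIV. y $ k * L2 (eU k) (eY j) p)
      + (\<Sum>k\<in>UNIV. a $ k * L2 (eY k) (eY j) p)" for j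
    using lin_triple[OF L2_lin[OF T7[OF s t']], of 1 y a] unfolding p_def[symmetric]
    by (simp add: eT_def eU_def eY_def)
  have c3: "(\<Sum>j\<in>UNIV. L1 (eY j) p * Wf s X t $ j) = - (\<Sum>j\<in>UNIV. L1 (eU j) p * Zf s X t $ j)"
    using C3[OF s t c] unfolding p_def[symmetric] by (simp add: mult.commute add_eq_0_iff)
  have "(\<Sum>j\<in>UNIV. 1/2 * L2 (1, y, a) (eY j) p * Zf s X t $ j + 1/2 * L1 (eY j) p * Wf s X t $ j)
      = (\<Sum>j\<in>UNIV. 1/2 * L2 (1, y, a) (eY j) p * Zf s X t $ j) + 1/2 * (\<Sum>j\<in>UNIV. L1 (eY j) p * Wf s X t $ j)"
    by (simp add: sum.distrib sum_distrib_left mult_ac)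
  also have "\<dots> = (\<Sum>j\<in>UNIV. Zf s X t $ j * Bv t u y a j)"
    unfolding c3 Bv_def p[symmetric] lin
    by (simp add: sum_distrib_left sum_distrib_right sum_subtractf sum.distrib algebra_simps mult.commute)
  finally show ?thesis using D unfolding u_def y_def a_def by simp
qed

end


lemma ode_zero:
  fixes h r :: "real \<Rightarrow> real"
  assumes lt: "t0 < t1" and ch: "continuous_on {t0..t1} h" and cr: "continuous_on {t0..t1} r"
    and h0: "h t0 = 0" and D: "\<And>\<tau>. t0 < \<tau> \<Longrightarrow> \<tau> < t1 \<Longrightarrow> DERIV h \<tau> :> r \<tau> * h \<tau>"
  shows "h t1 = 0"
proof -
  obtain C where C: "\<And>\<tau>. \<tau> \<in> {t0..t1} \<Longrightarrow> \<bar>r \<tau>\<bar> \<le> C"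
    using compact_imp_bounded[OF compact_continuous_image[OF cr compact_Icc]]
    unfolding bounded_iff by (metis image_eqI real_norm_def)
  define k where "k \<tau> = (h \<tau>)^2 * exp (- (2 * C) * \<tau>)" for \<tau>
  have ck: "continuous_on {t0..t1} k" unfolding k_def by (intro continuous_intros ch)
  have Dk: "DERIV k \<tau> :> 2 * h \<tau> * (r \<tau> * h \<tau>) * exp (- (2 * C) * \<tau>) + (h \<tau>)^2 * (exp (- (2 * C) * \<tau>) * (- (2 * C)))"
    if "t0 < \<tau>" "\<tau> < t1" for \<tau>
    unfolding k_def using D[OF that] by (auto intro!: derivative_eq_intros)
  obtain l z where z: "t0 < z" "z < t1" "DERIV k z :> l" "k t1 - k t0 = (t1 - t0) * l"
    using MVT[OF lt ck] Dk real_differentiable_def by blast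
  have l: "l = 2 * (r z - C) * (h z)^2 * exp (- (2 * C) * z)"
    using DERIV_unique[OF z(3) Dk[OF z(1,2)]] by (simp add: power2_eq_square algebra_simps)
  have "r z - C \<le> 0" using C[of z] z by auto
  then have "l \<le> 0" unfolding l by (simp add: mult_nonpos_nonneg)
  moreover have "(t1 - t0) * l \<le> 0" using \<open>l \<le> 0\<close> lt by (simp add: mult_nonneg_nonpos)
  ultimately have "k t1 \<le> k t0" using z(4) by linarith
  moreover have "k t0 = 0" by (simp add: k_def h0)
  ultimately have "(h t1)^2 * exp (- (2 * C) * t1) \<le> 0" by (simp add: k_def)
  then have "(h t1)^2 \<le> 0" by (simp add: mult_le_0_iff)
  then show ?thesis by simp
qed



lemma smooth_cont_at: "smooth_on S f \<Longrightarrow> x \<in> S \<Longrightarrow> continuous (at x) f"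
  using smooth_on_cont smooth_on_open continuous_on_eq_continuous_at by blast

lemma vd_cont: "(f has_vector_derivative f') (at x) \<Longrightarrow> continuous (at x) f"
  using differentiableI_vector differentiable_imp_continuous_within by blast

context nset begin

definition rr where "rr s \<tau> = (\<Sum>j\<in>UNIV. Bv \<tau> (\<Gamma> (s, \<tau>)) (Gt (s, \<tau>)) (Gtt (s, \<tau>)) j * Gt (s, \<tau>) $ j)"

lemma cP: "s \<in> N \<Longrightarrow> t0 \<le> \<tau> \<Longrightarrow> \<tau> < T \<Longrightarrow> continuous (at \<tau>) (\<lambda>\<sigma>. (\<sigma>, \<Gamma> (s, \<sigma>), Gt (s, \<sigma>)))"
  using vd_cont[OF Pvd] unfolding P_def by blast

lemma cGtt: "s \<in> N \<Longrightarrow> t0 \<le> \<tau> \<Longrightarrow> \<tau> < T \<Longrightarrow> continuous (at \<tau>) (\<lambda>\<sigma>. Gtt (s, \<sigma>))"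
  unfolding Gtt_def using vd_cont[OF vd_t[OF smooth_on_dd[OF Gt_smooth]]] by blast

lemma cGt: "s \<in> N \<Longrightarrow> t0 \<le> \<tau> \<Longrightarrow> \<tau> < T \<Longrightarrow> continuous (at \<tau>) (\<lambda>\<sigma>. Gt (s, \<sigma>))"
  using vd_cont[OF T2] by blast

lemma cL2: assumes "s \<in> N" "t0 \<le> \<tau>" "\<tau> < T"
  shows "continuous (at \<tau>) (\<lambda>\<sigma>. L2 w v (\<sigma>, \<Gamma> (s, \<sigma>), Gt (s, \<sigma>)))"
  using continuous_at_compose[OF cP[OF assms] smooth_cont_at[OF L2_smooth T7[OF assms, unfolded P_def]]]
  by (simp add: o_def)

lemma cL1: assumes "s \<in> N" "t0 \<le> \<tau>" "\<tau> < T"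
  shows "continuous (at \<tau>) (\<lambda>\<sigma>. L1 v (\<sigma>, \<Gamma> (s, \<sigma>), Gt (s, \<sigma>)))"
  using continuous_at_compose[OF cP[OF assms] smooth_cont_at[OF L1_smooth T7[OF assms, unfolded P_def]]]
  by (simp add: o_def)

lemma c_rr: assumes "s \<in> N" "t0 \<le> \<tau>" "\<tau> < T" shows "continuous (at \<tau>) (rr s)"
  unfolding rr_def Bv_def
  by (intro continuous_intros cL1[OF assms] cL2[OF assms] cGt[OF assms] cGtt[OF assms])

lemma c_hh: assumes "s \<in> N" "t0 \<le> \<tau>" "\<tau> < T" shows "continuous (at \<tau>) (hh s X)"
  unfolding hh_def P_def
  by (intro continuous_intros cL1[OF assms] vd_cont[OF Zvd[OF assms]])

lemma hh_t0: assumes s: "s \<in> N" and X: "X \<in> tangent_space N s" shows "hh s X t0 = 0"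
proof -
  obtain c where c: "curve s c X" using curve_tangent[OF X] by blast
  have P0: "P s t0 = (t0, s, n s)" unfolding P_def using T5[OF s] \<Gamma>\<gamma>[OF s, of t0] \<gamma>0[OF s] tT by auto
  have ns: "n s \<noteq> 0" using T6[OF s order.refl tT(1)] T5[OF s] by simp
  have t0I: "t0 \<in> I" "s \<in> M" using tT NM s by auto
  have "hh s X t0 = gform F t0 s (n s) (n s) X"
    unfolding hh_def P0 C2[OF s c] gform_yW[OF t0I ns] by (simp add: mult_ac)
  then show ?thesis using orth0[OF s X] by simp
qed

lemma hh_gform: assumes s: "s \<in> N" and t: "t \<in> {t0<..<T}"
  shows "gform F t (\<gamma> s t) (tvel \<gamma> s t) (tvel \<gamma> s t) Z = (\<Sum>j\<in>UNIV. 1/2 * L1 (eY j) (P s t) * Z $ j)"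
proof -
  have t': "t0 \<le> t" "t < T" using t by auto
  have e: "\<gamma> s t = \<Gamma> (s, t)" "tvel \<gamma> s t = Gt (s, t)" using \<Gamma>\<gamma>[OF s] T3[OF s t] t by auto
  show ?thesis unfolding e P_def by (rule gform_yW[OF tI[OF t'] \<Gamma>M[OF s t'] T6[OF s t']])
qed

lemma rr_eq: assumes s: "s \<in> N" and t: "t \<in> {t0<..<T}"
    and B: "\<And>j. Bv t (\<Gamma> (s, t)) (Gt (s, t)) (Gtt (s, t)) j = \<rho> * (1/2 * L1 (eY j) (P s t))"
  shows "rr s t = \<rho>"
proof -
  have t': "t0 \<le> t" "t < T" using t by auto
  have "rr s t = \<rho> * (1/2 * (\<Sum>j\<in>UNIV. Gt (s, t) $ j * L1 (eY j) (P s t)))"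
    unfolding rr_def B by (simp add: sum_distrib_left mult_ac)
  also have "(\<Sum>j\<in>UNIV. Gt (s, t) $ j * L1 (eY j) (P s t)) = 2 * LL (P s t)"
    unfolding P_def by (rule E1'[OF tI[OF t'] \<Gamma>M[OF s t'] T6[OF s t']])
  finally show ?thesis using T8[OF s t] by simp
qed

lemma AtoB:
  assumes A: "\<forall>s\<in>N. \<forall>t\<in>{t0<..<T}. \<rho> s t *\<^sub>R tvel \<gamma> s t =
            tacc \<gamma> s t + 2 *\<^sub>R Gspray F t (\<gamma> s t) (tvel \<gamma> s t) + N0 F t (\<gamma> s t) (tvel \<gamma> s t)"
    and s: "s \<in> N" and t: "t \<in> {t0<..<T}" and X: "X \<in> tangent_space N s"
  shows "hh s X t = 0"
proof -
  obtain c where c: "curve s c X" using curve_tangent[OF X] by blast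
  have der: "DERIV (hh s X) \<tau> :> rr s \<tau> * hh s X \<tau>" if \<tau>: "t0 < \<tau>" "\<tau> < t" for \<tau>
  proof -
    have \<tau>': "\<tau> \<in> {t0<..<T}" using \<tau> t by auto
    have \<tau>'': "t0 \<le> \<tau>" "\<tau> < T" using \<tau>' by auto
    define u y a where "u = \<Gamma> (s, \<tau>)" and "y = Gt (s, \<tau>)" and "a = Gtt (s, \<tau>)"
    have e: "\<gamma> s \<tau> = u" "tvel \<gamma> s \<tau> = y" "tacc \<gamma> s \<tau> = a"
      using \<Gamma>\<gamma>[OF s] T3[OF s \<tau>'] T4[OF s \<tau>'] \<tau>' by (auto simp: u_def y_def a_def)
    have Ae: "\<rho> s \<tau> *\<^sub>R y = a + 2 *\<^sub>R Gspray F \<tau> u y + N0 F \<tau> u y" using A s \<tau>' e by metis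
    have uM: "u \<in> M" and y0: "y \<noteq> 0" using \<Gamma>M[OF s \<tau>''] T6[OF s \<tau>''] by (auto simp: u_def y_def)
    have B: "Bv \<tau> u y a j = \<rho> s \<tau> * (1/2 * L1 (eY j) (P s \<tau>))" for j
    proof -
      have "Bv \<tau> u y a j = (\<Sum>i\<in>UNIV. gmat F \<tau> u y $ i $ j * (\<rho> s \<tau> *\<^sub>R y) $ i)"
        unfolding Ae by (rule Bform[OF open_greaterThanLessThan _ \<tau>' uM y0, symmetric]) (use tT in auto)
      also have "\<dots> = \<rho> s \<tau> * (\<Sum>i\<in>UNIV. gmat F \<tau> u y $ i $ j * y $ i)"
        by (simp add: sum_distrib_left mult_ac)
      also have "\<dots> = \<rho> s \<tau> * (1/2 * L1 (eY j) (P s \<tau>))"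
        using gmat_y[OF tI[OF \<tau>''] uM y0] by (simp add: P_def u_def y_def)
      finally show ?thesis .
    qed
    have rr: "rr s \<tau> = \<rho> s \<tau>" by (rule rr_eq[OF s \<tau>']) (use B in \<open>simp add: u_def y_def a_def\<close>)
    have "DERIV (hh s X) \<tau> :> (\<Sum>j\<in>UNIV. Zf s X \<tau> $ j * Bv \<tau> u y a j)"
      using hh_deriv[OF s \<tau>' c] by (simp add: u_def y_def a_def)
    also have "(\<Sum>j\<in>UNIV. Zf s X \<tau> $ j * Bv \<tau> u y a j) = rr s \<tau> * hh s X \<tau>"
      unfolding B rr hh_def by (simp add: sum_distrib_left mult_ac)
    finally show ?thesis .
  qed
  have lt: "t0 < t" using t by simp
  have cont: "continuous_on {t0..t} f" if "\<And>\<tau>. t0 \<le> \<tau> \<Longrightarrow> \<tau> < T \<Longrightarrow> continuous (at \<tau>) f" for f :: "real \<Rightarrow> real"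
    using that t by (intro continuous_at_imp_continuous_on) auto
  show ?thesis
    by (rule ode_zero[OF lt cont cont hh_t0[OF s X] der]) (auto intro: c_hh[OF s] c_rr[OF s])
qed

end


context nset begin

lemma Dlink:
  assumes s: "s \<in> N" and t: "t \<in> {t0<..<T}" and X: "X \<in> tangent_space N s"
    and D: "((\<lambda>(s', t'). \<gamma> s' t') has_derivative D) (at (s, t) within N \<times> {t0<..<T})"
  shows "D (X, 0) = Zf s X t"
proof -
  obtain c where c: "curve s c X" using curve_tangent[OF X] by blast
  have t': "t0 \<le> t" "t < T" using t by auto
  have \<phi>: "((\<lambda>h. (c h, t)) has_derivative (\<lambda>h. h *\<^sub>R (X, 0))) (at 0)"
    using c unfolding curve_def has_vector_derivative_def
    by (auto intro!: derivative_eq_intros)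
  have sub: "(\<lambda>h. (c h, t)) ` UNIV \<subseteq> N \<times> {t0<..<T}" using c t unfolding curve_def by auto
  have D': "((\<lambda>(s', t'). \<gamma> s' t') has_derivative D) (at ((\<lambda>h. (c h, t)) 0) within (\<lambda>h. (c h, t)) ` UNIV)"
    using has_derivative_subset[OF D sub] c unfolding curve_def by simp
  have L: "linear D" using D has_derivative_linear by blast
  have "((\<lambda>h. \<gamma> (c h) t) has_derivative (\<lambda>h. D (h *\<^sub>R (X, 0)))) (at 0)"
    using has_derivative_in_compose[OF \<phi> D'] by simp
  moreover have "\<And>h. D (h *\<^sub>R X, 0) = h *\<^sub>R D (X, 0)" using linear_scale[OF L, of _ "(X, 0)"] by simp
  ultimately have a: "((\<lambda>h. \<gamma> (c h) t) has_vector_derivative D (X, 0)) (at 0)"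
    unfolding has_vector_derivative_def by simp
  have b: "((\<lambda>h. \<Gamma> (c h, t)) has_vector_derivative Zf s X t) (at 0)"
    unfolding Zf_def by (rule C1[OF \<Gamma>V(1) s t' c])
  have "\<Gamma> (c h, t) = \<gamma> (c h) t" for h using \<Gamma>\<gamma>[of "c h" t] c t' unfolding curve_def by auto
  then show ?thesis using a b vector_derivative_unique_at by auto
qed

lemma surj_dG:
  assumes U: "open U" "bij_betw (\<lambda>(s, t). \<gamma> s t) (N \<times> {t0<..<T}) U"
      "smooth_on U (inv_into (N \<times> {t0<..<T}) (\<lambda>(s, t). \<gamma> s t))"
    and s: "s \<in> N" and t: "t \<in> {t0<..<T}"
  shows "\<exists>X\<in>tangent_space N s. \<exists>\<tau>. dirderiv \<Gamma> (s, t) (X, \<tau>) = v"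
proof -
  define f where "f = (\<lambda>(s::real^'n, t::real). \<gamma> s t)"
  define A where "A = N \<times> {t0<..<T}"
  define \<iota> where "\<iota> = inv_into A f"
  have bij: "bij_betw f A U" using U(2) unfolding f_def A_def .
  have sm: "smooth_on U \<iota>" using U(3) unfolding \<iota>_def A_def f_def .
  define q where "q = \<gamma> s t"
  have sA: "(s, t) \<in> A" using s t unfolding A_def by auto
  have qU: "q \<in> U" using bij_betw_apply[OF bij sA] unfolding f_def q_def by simp
  have iq: "\<iota> q = (s, t)"
    unfolding \<iota>_def q_def using bij_betw_imp_inj_on[OF bij] sA inv_into_f_f[of f A "(s,t)"] by (simp add: f_def)
  have bij': "bij_betw \<iota> U A" unfolding \<iota>_def by (rule bij_betw_inv_into[OF bij])
  define w where "w = dirderiv \<iota> q v"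
  have hv: "((\<lambda>h. \<iota> (q + h *\<^sub>R v)) has_vector_derivative w) (at 0)"
    unfolding w_def by (rule smooth_on_has_dd[OF sm qU])
  have ev: "eventually (\<lambda>h. q + h *\<^sub>R v \<in> U) (nhds 0)" by (rule ev_line[OF U(1) qU])
  have inA: "\<iota> x \<in> A" if "x \<in> U" for x using bij_betw_apply[OF bij' that] .
  have fi: "f (\<iota> x) = x" if "x \<in> U" for x
    unfolding \<iota>_def using f_inv_into_f[of x f A] bij that by (simp add: bij_betw_def)
  have Gi: "\<Gamma> (\<iota> x) = x" if "x \<in> U" for x
  proof -
    obtain a b where ab: "\<iota> x = (a, b)" by fastforce
    have "a \<in> N" "b \<in> {t0<..<T}" using inA[OF that] ab unfolding A_def by auto
    then show ?thesis using fi[OF that] ab \<Gamma>\<gamma>[of a b] unfolding f_def by auto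
  qed
  have ch: "((\<lambda>h. \<Gamma> (\<iota> (q + h *\<^sub>R v))) has_vector_derivative dirderiv \<Gamma> (s, t) w) (at 0)"
    using smooth_vd_chain[OF \<Gamma>V(1) hv] iq inV[OF s] t by auto
  have ev2: "eventually (\<lambda>h. \<Gamma> (\<iota> (q + h *\<^sub>R v)) = q + h *\<^sub>R v) (nhds 0)"
    using ev by eventually_elim (use Gi in auto)
  have "((\<lambda>h. q + h *\<^sub>R v) has_vector_derivative dirderiv \<Gamma> (s, t) w) (at 0)"
    using has_vector_derivative_cong_ev[where S=UNIV and x=0 and f="\<lambda>h. \<Gamma> (\<iota> (q + h *\<^sub>R v))" and g="\<lambda>h. q + h *\<^sub>R v"] ev2 ch
    using Gi[OF qU] by (auto simp: eventually_mono[OF ev2])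
  moreover have "((\<lambda>h. q + h *\<^sub>R v) has_vector_derivative v) (at 0)"
    by (auto intro!: derivative_eq_intros)
  ultimately have wv: "dirderiv \<Gamma> (s, t) w = v" using vector_derivative_unique_at by blast
  define c where "c h = (if q + h *\<^sub>R v \<in> U then fst (\<iota> (q + h *\<^sub>R v)) else s)" for h
  have "X \<in> tangent_space N s" if "X = fst w" for X
    unfolding tangent_space_def
  proof (intro CollectI exI[of _ c] conjI allI)
    show "c 0 = s" using qU iq by (simp add: c_def)
    fix h show "c h \<in> N" using inA s unfolding c_def A_def by (auto simp: mem_Times_iff)
  next
    have "((\<lambda>h. fst (\<iota> (q + h *\<^sub>R v))) has_vector_derivative fst w) (at 0)"
      using bounded_linear.has_derivative[OF bounded_linear_fst hv[unfolded has_vector_derivative_def]]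
      unfolding has_vector_derivative_def by simp
    moreover have ev3: "eventually (\<lambda>h. fst (\<iota> (q + h *\<^sub>R v)) = c h) (nhds 0)"
      using ev by eventually_elim (simp add: c_def)
    ultimately show "(c has_vector_derivative X) (at 0)"
      using has_vector_derivative_cong_ev[where S=UNIV and x=0 and f="\<lambda>h. fst (\<iota> (q + h *\<^sub>R v))" and g=c] that
      by (auto simp: eventually_mono[OF ev3] c_def qU)
  qed
  then show ?thesis using wv by (intro bexI[of _ "fst w"] exI[of _ "snd w"]) auto
qed

end


context nset begin

lemma hh_zero_B:
  assumes B: "\<forall>s\<in>N. \<forall>t\<in>{t0<..<T}. \<forall>D. ((\<lambda>(s', t'). \<gamma> s' t') has_derivative D) (at (s, t) within N \<times> {t0<..<T}) \<longrightarrow>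
        (\<forall>X\<in>tangent_space N s. gform F t (\<gamma> s t) (tvel \<gamma> s t) (tvel \<gamma> s t) (D (X, 0)) = 0)"
    and s: "s \<in> N" and t: "t \<in> {t0<..<T}" and X: "X \<in> tangent_space N s"
  shows "hh s X t = 0"
proof -
  have t': "t0 \<le> t" "t < T" using t by auto
  have "(\<Gamma> has_derivative (\<lambda>w. dirderiv \<Gamma> (s, t) w)) (at (s, t))"
    by (rule smooth_on_deriv(1)[OF \<Gamma>V(1) inV[OF s t']])
  then have "(\<Gamma> has_derivative (\<lambda>w. dirderiv \<Gamma> (s, t) w)) (at (s, t) within N \<times> {t0<..<T})"
    by (rule has_derivative_at_withinI)
  then have D: "((\<lambda>(s', t'). \<gamma> s' t') has_derivative (\<lambda>w. dirderiv \<Gamma> (s, t) w)) (at (s, t) within N \<times> {t0<..<T})"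
    by (rule has_derivative_transform_within[of _ _ _ _ 1]) (use s t \<Gamma>\<gamma> in auto)
  have "gform F t (\<gamma> s t) (tvel \<gamma> s t) (tvel \<gamma> s t) (dirderiv \<Gamma> (s, t) (X, 0)) = 0"
    using B s t X D by blast
  then show ?thesis unfolding hh_gform[OF s t] hh_def Zf_def .
qed

lemma BtoA:
  assumes U: "open U" "bij_betw (\<lambda>(s, t). \<gamma> s t) (N \<times> {t0<..<T}) U"
      "smooth_on U (inv_into (N \<times> {t0<..<T}) (\<lambda>(s, t). \<gamma> s t))"
    and B: "\<forall>s\<in>N. \<forall>t\<in>{t0<..<T}. \<forall>D. ((\<lambda>(s', t'). \<gamma> s' t') has_derivative D) (at (s, t) within N \<times> {t0<..<T}) \<longrightarrow>
        (\<forall>X\<in>tangent_space N s. gform F t (\<gamma> s t) (tvel \<gamma> s t) (tvel \<gamma> s t) (D (X, 0)) = 0)"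
  shows "\<exists>\<rho> :: real^'n \<Rightarrow> real \<Rightarrow> real. \<forall>s\<in>N. \<forall>t\<in>{t0<..<T}.
            \<rho> s t *\<^sub>R tvel \<gamma> s t =
              tacc \<gamma> s t + 2 *\<^sub>R Gspray F t (\<gamma> s t) (tvel \<gamma> s t) + N0 F t (\<gamma> s t) (tvel \<gamma> s t)"
proof (intro exI[of _ rr] ballI)
  fix s t assume s: "s \<in> N" and t: "t \<in> {t0<..<T}"
  have t': "t0 \<le> t" "t < T" using t by auto
  define u y a where "u = \<Gamma> (s, t)" and "y = Gt (s, t)" and "a = Gtt (s, t)"
  have e: "\<gamma> s t = u" "tvel \<gamma> s t = y" "tacc \<gamma> s t = a"
    using \<Gamma>\<gamma>[OF s] T3[OF s t] T4[OF s t] t by (auto simp: u_def y_def a_def)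
  have uM: "u \<in> M" and y0: "y \<noteq> 0" using \<Gamma>M[OF s t'] T6[OF s t'] by (auto simp: u_def y_def)
  have tI': "t \<in> I" by (rule tI[OF t'])
  define \<beta> where "\<beta> j = Bv t u y a j" for j
  define lam where "lam j = 1/2 * L1 (eY j) (P s t)" for j
  define \<rho> where "\<rho> = rr s t"
  have \<rho>: "\<rho> = (\<Sum>j\<in>UNIV. \<beta> j * y $ j)" unfolding \<rho>_def rr_def \<beta>_def u_def y_def a_def ..
  have ly: "(\<Sum>j\<in>UNIV. y $ j * lam j) = 1"
  proof -
    have "(\<Sum>j\<in>UNIV. y $ j * lam j) = 1/2 * (\<Sum>j\<in>UNIV. y $ j * L1 (eY j) (P s t))"
      unfolding lam_def by (simp add: sum_distrib_left mult_ac)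
    also have "(\<Sum>j\<in>UNIV. y $ j * L1 (eY j) (P s t)) = 2 * LL (P s t)"
      unfolding P_def y_def by (rule E1'[OF tI' \<Gamma>M[OF s t'] T6[OF s t']])
    finally show ?thesis using T8[OF s t] by simp
  qed
  have ZB: "(\<Sum>j\<in>UNIV. Zf s X t $ j * \<beta> j) = 0" if X: "X \<in> tangent_space N s" for X
  proof -
    obtain c where c: "curve s c X" using curve_tangent[OF X] by blast
    have d1: "DERIV (hh s X) t :> (\<Sum>j\<in>UNIV. Zf s X t $ j * \<beta> j)"
      using hh_deriv[OF s t c] unfolding \<beta>_def u_def y_def a_def .
    have ev: "eventually (\<lambda>\<tau>. hh s X \<tau> = 0) (nhds t)"
      using eventually_nhds_in_open[OF open_greaterThanLessThan t]
      by eventually_elim (use hh_zero_B[OF B s _ X] in auto)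
    have "DERIV (\<lambda>\<tau>. 0::real) t :> 0" by simp
    then have d2: "DERIV (hh s X) t :> 0" using DERIV_cong_ev[OF refl ev refl] by simp
    show ?thesis using DERIV_unique[OF d1 d2] .
  qed
  have ZL: "(\<Sum>j\<in>UNIV. Zf s X t $ j * lam j) = 0" if X: "X \<in> tangent_space N s" for X
    using hh_zero_B[OF B s t X] unfolding hh_def lam_def by (simp add: mult_ac)
  have lin: "linear (\<lambda>w. dirderiv \<Gamma> (s, t) w)" by (rule smooth_on_deriv(2)[OF \<Gamma>V(1) inV[OF s t']])
  have dsplit: "dirderiv \<Gamma> (s, t) (X, \<tau>) = Zf s X t + \<tau> *\<^sub>R y" for X \<tau>
  proof -
    have "(X, \<tau>) = (X, 0) + \<tau> *\<^sub>R (0, 1)" by simp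
    then have "dirderiv \<Gamma> (s, t) (X, \<tau>) = dirderiv \<Gamma> (s, t) (X, 0) + \<tau> *\<^sub>R dirderiv \<Gamma> (s, t) (0, 1)"
      by (metis linear_add[OF lin] linear_scale[OF lin])
    then show ?thesis unfolding Zf_def y_def Gt_def .
  qed
  have bl: "\<beta> k = \<rho> * lam k" for k
  proof -
    obtain X \<tau> where X: "X \<in> tangent_space N s" and v: "dirderiv \<Gamma> (s, t) (X, \<tau>) = axis k 1"
      using surj_dG[OF U s t, of "axis k 1"] by blast
    have ax: "axis k 1 = Zf s X t + \<tau> *\<^sub>R y" using v dsplit by simp
    have "(\<Sum>j\<in>UNIV. axis k 1 $ j * (\<beta> j - \<rho> * lam j)) =
        (\<Sum>j\<in>UNIV. Zf s X t $ j * \<beta> j) - \<rho> * (\<Sum>j\<in>UNIV. Zf s X t $ j * lam j)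
        + \<tau> * ((\<Sum>j\<in>UNIV. \<beta> j * y $ j) - \<rho> * (\<Sum>j\<in>UNIV. y $ j * lam j))"
      unfolding ax by (simp add: algebra_simps sum.distrib sum_subtractf sum_distrib_left)
    also have "\<dots> = 0" using ZB[OF X] ZL[OF X] ly \<rho> by simp
    finally have "(\<Sum>j\<in>UNIV. axis k 1 $ j * (\<beta> j - \<rho> * lam j)) = 0" .
    moreover have "(\<Sum>j\<in>UNIV. axis k 1 $ j * (\<beta> j - \<rho> * lam j)) = \<beta> k - \<rho> * lam k"
    proof -
      have "\<And>j. axis k 1 $ j * (\<beta> j - \<rho> * lam j) = (if j = k then \<beta> j - \<rho> * lam j else 0)"
        by (simp add: axis_def)
      then show ?thesis by simp
    qed
    ultimately show ?thesis by simp
  qed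
  define E where "E = a + 2 *\<^sub>R Gspray F t u y + N0 F t u y"
  define w where "w = E - \<rho> *\<^sub>R y"
  have gw: "(\<Sum>i\<in>UNIV. gmat F t u y $ i $ j * w $ i) = 0" for j
  proof -
    have "(\<Sum>i\<in>UNIV. gmat F t u y $ i $ j * w $ i) =
        (\<Sum>i\<in>UNIV. gmat F t u y $ i $ j * E $ i) - \<rho> * (\<Sum>i\<in>UNIV. gmat F t u y $ i $ j * y $ i)"
      unfolding w_def by (simp add: algebra_simps sum_subtractf sum_distrib_left)
    also have "(\<Sum>i\<in>UNIV. gmat F t u y $ i $ j * E $ i) = \<beta> j"
      unfolding E_def \<beta>_def by (rule Bform[OF open_greaterThanLessThan _ t uM y0]) (use tT in auto)
    also have "(\<Sum>i\<in>UNIV. gmat F t u y $ i $ j * y $ i) = lam j"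
      unfolding lam_def using gmat_y[OF tI' uM y0] by (simp add: P_def u_def y_def)
    finally show ?thesis using bl by simp
  qed
  have "gform F t u y w w = 0" unfolding gform_VW gw by simp
  then have "w = 0" using pos[OF tI' uM y0, of w] by force
  then have "rr s t *\<^sub>R y = E" unfolding w_def \<rho>_def by simp
  then show "rr s t *\<^sub>R tvel \<gamma> s t =
      tacc \<gamma> s t + 2 *\<^sub>R Gspray F t (\<gamma> s t) (tvel \<gamma> s t) + N0 F t (\<gamma> s t) (tvel \<gamma> s t)"
    unfolding e E_def .
qed

end


theorem mainTheorem3:
  fixes F :: "'n::finite tfun"
    and I :: "real set" and M N U :: "(real^'n) set"
    and t0 T :: real and n :: "real^'n \<Rightarrow> real^'n"
    and \<gamma> :: "real^'n \<Rightarrow> real \<Rightarrow> real^'n"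
  assumes "time_finsler I M F"
    and "t0 < T" and "{t0..<T} \<subseteq> I"
    and "N \<subseteq> M" and "embedded_hypersurface N" and "orientable_hypersurface N"
    and "unit_normal_field F t0 N n"
    and "U \<subseteq> M"
    and "unit_fiber_net F N t0 T n \<gamma> U"
  shows "(\<exists>\<rho> :: real^'n \<Rightarrow> real \<Rightarrow> real. \<forall>s\<in>N. \<forall>t\<in>{t0<..<T}.
            \<rho> s t *\<^sub>R tvel \<gamma> s t =
              tacc \<gamma> s t + 2 *\<^sub>R Gspray F t (\<gamma> s t) (tvel \<gamma> s t) + N0 F t (\<gamma> s t) (tvel \<gamma> s t))
     \<longleftrightarrow>
     (\<forall>s\<in>N. \<forall>t\<in>{t0<..<T}. \<forall>D. ((\<lambda>(s', t'). \<gamma> s' t') has_derivative D) (at (s, t) within N \<times> {t0<..<T}) \<longrightarrow>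
        (\<forall>X\<in>tangent_space N s. gform F t (\<gamma> s t) (tvel \<gamma> s t) (tvel \<gamma> s t) (D (X, 0)) = 0))"
proof -
  note tf = assms(1)[unfolded time_finsler_def]
  note tfM = tf[THEN conjunct2, THEN conjunct1]
  note tfS = tf[THEN conjunct2, THEN conjunct2, THEN conjunct1]
  note tfH = tf[THEN conjunct2, THEN conjunct2, THEN conjunct2, THEN conjunct2, THEN conjunct1]
  note tfP = tf[THEN conjunct2, THEN conjunct2, THEN conjunct2, THEN conjunct2, THEN conjunct2]
  obtain Ug g where g: "I \<times> M \<times> (UNIV - {0}) \<subseteq> Ug" "smooth_on Ug g"
    "\<And>x. x \<in> I \<times> M \<times> (UNIV - {0}) \<Longrightarrow> g x = (\<lambda>(t, u, y). F t u y) x"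
    using tfS unfolding smooth_on_set_def by blast
  note uf = assms(9)[unfolded unit_fiber_net_def]
  note ufU = uf[THEN conjunct1]
  note ufB = uf[THEN conjunct2, THEN conjunct1]
  note ufS = uf[THEN conjunct2, THEN conjunct2, THEN conjunct1]
  note ufI = uf[THEN conjunct2, THEN conjunct2, THEN conjunct2, THEN conjunct1]
  note uf0 = uf[THEN conjunct2, THEN conjunct2, THEN conjunct2, THEN conjunct2, THEN conjunct1]
  note uf1 = uf[THEN conjunct2, THEN conjunct2, THEN conjunct2, THEN conjunct2, THEN conjunct2]
  obtain V \<Gamma> where G: "N \<times> {t0..<T} \<subseteq> V" "smooth_on V \<Gamma>"
    "\<And>x. x \<in> N \<times> {t0..<T} \<Longrightarrow> \<Gamma> x = (\<lambda>(s, t). \<gamma> s t) x"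
    using ufS unfolding smooth_on_set_def by blast
  note un = assms(7)[unfolded unit_normal_field_def, THEN conjunct2]
  interpret nset F I M g Ug N t0 T n \<gamma> \<Gamma> V
  proof (unfold_locales)
    show "smooth_on Ug g" by (rule g(2))
    show "I \<times> M \<times> (UNIV - {0}) \<subseteq> Ug" by (rule g(1))
    show "\<And>t u y. t \<in> I \<Longrightarrow> u \<in> M \<Longrightarrow> y \<noteq> 0 \<Longrightarrow> g (t, u, y) = F t u y" using g(3) by auto
    show "\<And>t u y k. t \<in> I \<Longrightarrow> u \<in> M \<Longrightarrow> 0 < k \<Longrightarrow> F t u (k *\<^sub>R y) = k * F t u y" using tfH by blast
    show "\<And>t u y V. t \<in> I \<Longrightarrow> u \<in> M \<Longrightarrow> y \<noteq> 0 \<Longrightarrow> V \<noteq> 0 \<Longrightarrow> 0 < gform F t u y V V" using tfP by blast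
    show "open M" by (rule tfM)
    show "t0 < T" "{t0..<T} \<subseteq> I" "N \<subseteq> M" by (fact assms(2), fact assms(3), fact assms(4))
    show "smooth_on V \<Gamma>" "N \<times> {t0..<T} \<subseteq> V" by (fact G(2), fact G(1))
    show "\<And>s t. s \<in> N \<Longrightarrow> t \<in> {t0..<T} \<Longrightarrow> \<Gamma> (s, t) = \<gamma> s t" using G(3) by auto
    show "\<And>s. s \<in> N \<Longrightarrow> \<gamma> s t0 = s" using uf0 by blast
    show "\<And>s. s \<in> N \<Longrightarrow> vector_derivative (\<gamma> s) (at t0 within {t0..<T}) = n s" using uf0 by blast
    show "\<And>s t. s \<in> N \<Longrightarrow> t \<in> {t0<..<T} \<Longrightarrow> F t (\<gamma> s t) (tvel \<gamma> s t) = 1" using uf1 by blast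
    show "\<And>s. s \<in> N \<Longrightarrow> F t0 s (n s) = 1" using un by blast
    show "\<And>s X. s \<in> N \<Longrightarrow> X \<in> tangent_space N s \<Longrightarrow> gform F t0 s (n s) (n s) X = 0" using un by blast
    show "\<And>s t. s \<in> N \<Longrightarrow> t \<in> {t0<..<T} \<Longrightarrow> \<gamma> s t \<in> M"
    proof -
      fix s t assume "s \<in> N" "t \<in> {t0<..<T}"
      then have "(s, t) \<in> N \<times> {t0<..<T}" by simp
      from bij_betw_apply[OF ufB this] show "\<gamma> s t \<in> M" using assms(8) by auto
    qed
  qed
  show ?thesis
  proof
    assume "\<exists>\<rho> :: real^'n \<Rightarrow> real \<Rightarrow> real. \<forall>s\<in>N. \<forall>t\<in>{t0<..<T}.
            \<rho> s t *\<^sub>R tvel \<gamma> s t =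
              tacc \<gamma> s t + 2 *\<^sub>R Gspray F t (\<gamma> s t) (tvel \<gamma> s t) + N0 F t (\<gamma> s t) (tvel \<gamma> s t)"
    then obtain \<rho> :: "real^'n \<Rightarrow> real \<Rightarrow> real" where A: "\<forall>s\<in>N. \<forall>t\<in>{t0<..<T}.
            \<rho> s t *\<^sub>R tvel \<gamma> s t =
              tacc \<gamma> s t + 2 *\<^sub>R Gspray F t (\<gamma> s t) (tvel \<gamma> s t) + N0 F t (\<gamma> s t) (tvel \<gamma> s t)" by blast
    show "\<forall>s\<in>N. \<forall>t\<in>{t0<..<T}. \<forall>D. ((\<lambda>(s', t'). \<gamma> s' t') has_derivative D) (at (s, t) within N \<times> {t0<..<T}) \<longrightarrow>
        (\<forall>X\<in>tangent_space N s. gform F t (\<gamma> s t) (tvel \<gamma> s t) (tvel \<gamma> s t) (D (X, 0)) = 0)"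
    proof (intro ballI allI impI)
      fix s t D X assume s: "s \<in> N" and t: "t \<in> {t0<..<T}"
        and D: "((\<lambda>(s', t'). \<gamma> s' t') has_derivative D) (at (s, t) within N \<times> {t0<..<T})"
        and X: "X \<in> tangent_space N s"
      have "gform F t (\<gamma> s t) (tvel \<gamma> s t) (tvel \<gamma> s t) (D (X, 0)) = hh s X t"
        unfolding Dlink[OF s t X D] hh_gform[OF s t] hh_def by (simp add: mult_ac)
      then show "gform F t (\<gamma> s t) (tvel \<gamma> s t) (tvel \<gamma> s t) (D (X, 0)) = 0"
        using AtoB[OF A s t X] by simp
    qed
  next
    assume B: "\<forall>s\<in>N. \<forall>t\<in>{t0<..<T}. \<forall>D. ((\<lambda>(s', t'). \<gamma> s' t') has_derivative D) (at (s, t) within N \<times> {t0<..<T}) \<longrightarrow>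
        (\<forall>X\<in>tangent_space N s. gform F t (\<gamma> s t) (tvel \<gamma> s t) (tvel \<gamma> s t) (D (X, 0)) = 0)"
    show "\<exists>\<rho> :: real^'n \<Rightarrow> real \<Rightarrow> real. \<forall>s\<in>N. \<forall>t\<in>{t0<..<T}.
            \<rho> s t *\<^sub>R tvel \<gamma> s t =
              tacc \<gamma> s t + 2 *\<^sub>R Gspray F t (\<gamma> s t) (tvel \<gamma> s t) + N0 F t (\<gamma> s t) (tvel \<gamma> s t)"
      by (rule BtoA[OF ufU ufB ufI B])
  qed
qed


end
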